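(* Let $s>1/2$, $p>0$, let $R_s(x)=\sum_{n=1}^\infty n^{-2s}e^{2\pi i n^2 x}$ on $\mathbb T$, and let $\eta_s(p)=\sup\{\sigma: R_s\in B^{\sigma/p}_{p,\infty}\}$. Then \[ \eta_s(p)=\begin{cases} p(s-1/4), & p\le 4,\\ 1+p(s-1/2), & p>4.\end{cases} \]
   Context: $\mathbb T=\mathbb R/\mathbb Z$, $e_n(x)=e^{2\pi i n x}$. Besov spaces on $\mathbb T$ (for all $p>0$) are defined via Littlewood–Paley blocks: for $f=\sum_n\hat f_ne_n$ and an integer $A\ge2$, let $P_kf=\sum_{A^k\le |n|<A^{k+1}}\hat f_ne_n$ (with the lowest frequencies in the first block); $f\in B^{\sigma}_{p,\infty}$ iff $\sup_{k\in\mathbb N}A^{k\sigma}\|P_kf\|_{L^p(\mathbb T)}<\infty$. *)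

theory Defs
  imports "HOL-Analysis.Analysis"
begin

text \<open>Characters e_n(x) = exp(2 pi i n x) on the torus R/Z (functions on R, 1-periodic).\<close>
definition echar :: "int \<Rightarrow> real \<Rightarrow> complex" where
  "echar n x = exp (2 * of_real pi * \<i> * of_real (real_of_int n * x))"

definition fourier_coeff :: "(real \<Rightarrow> complex) \<Rightarrow> int \<Rightarrow> complex" where
  "fourier_coeff f n = (LINT x:{0..1}|lborel. f x * cnj (echar n x))"

definition LP_block_set :: "nat \<Rightarrow> nat \<Rightarrow> int set" where
  "LP_block_set A k =
     (if k = 0 then {n. \<bar>n\<bar> < int A}
      else {n. int A ^ k \<le> \<bar>n\<bar> \<and> \<bar>n\<bar> < int A ^ (k+1)})"

definition LP_block :: "nat \<Rightarrow> nat \<Rightarrow> (real \<Rightarrow> complex) \<Rightarrow> real \<Rightarrow> complex" where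
  "LP_block A k f x = (\<Sum>n\<in>LP_block_set A k. fourier_coeff f n * echar n x)"

definition Lp_norm_T :: "real \<Rightarrow> (real \<Rightarrow> complex) \<Rightarrow> real" where
  "Lp_norm_T p g = (LINT x:{0..1}|lborel. norm (g x) powr p) powr (1 / p)"

definition besov_inf :: "nat \<Rightarrow> real \<Rightarrow> real \<Rightarrow> (real \<Rightarrow> complex) \<Rightarrow> bool" where
  "besov_inf A \<sigma> p f \<longleftrightarrow>
     bdd_above (range (\<lambda>k. real A powr (real k * \<sigma>) * Lp_norm_T p (LP_block A k f)))"

definition R_fun :: "real \<Rightarrow> real \<Rightarrow> complex" where
  "R_fun s x = (\<Sum>m. of_real (real (Suc m) powr (-2 * s)) * echar (int ((Suc m)^2)) x)"

end

theory Submission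
  imports Defs "HOL-Computational_Algebra.Primes"
begin

lemma Xpow: "real A > 0 \<Longrightarrow> real A powr (real k * t) = (real A ^ k) powr t"
  by (simp add: powr_powr[symmetric] powr_realpow)

lemma G_up:
  fixes J K X e a p :: real
  assumes "0 \<le> J" "J \<le> K * X powr e" "K > 0" "X > 0" "p > 0"
  shows "X powr a * J powr (1/p) \<le> K powr (1/p) * X powr (a + e/p)"
proof -
  have "J powr (1/p) \<le> (K * X powr e) powr (1/p)" using assms by (intro powr_mono2) auto
  also have "\<dots> = K powr (1/p) * X powr (e/p)" using assms by (simp add: powr_mult powr_powr)
  finally have "X powr a * J powr (1/p) \<le> X powr a * (K powr (1/p) * X powr (e/p))"
    by (intro mult_left_mono) auto
  also have "\<dots> = K powr (1/p) * X powr (a + e/p)" by (simp add: powr_add)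
  finally show ?thesis .
qed

lemma G_low:
  fixes J K X e a p :: real
  assumes "J \<ge> K * X powr e" "K > 0" "X > 0" "p > 0"
  shows "X powr a * J powr (1/p) \<ge> K powr (1/p) * X powr (a + e/p)"
proof -
  have "J powr (1/p) \<ge> (K * X powr e) powr (1/p)" using assms by (intro powr_mono2) auto
  moreover have "(K * X powr e) powr (1/p) = K powr (1/p) * X powr (e/p)" using assms by (simp add: powr_mult powr_powr)
  ultimately have "X powr a * J powr (1/p) \<ge> X powr a * (K powr (1/p) * X powr (e/p))"
    by (intro mult_left_mono) auto
  moreover have "X powr a * (K powr (1/p) * X powr (e/p)) = K powr (1/p) * X powr (a + e/p)" by (simp add: powr_add)
  ultimately show ?thesis by simp
qed

lemma unbounded_lemma:
  fixes f :: "nat \<Rightarrow> real" and A :: nat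
  assumes A: "A \<ge> 2" and c0: "c0 > 0" and d: "d > 0"
    and f: "\<And>k. k \<ge> 1 \<Longrightarrow> real A ^ k \<ge> X0 \<Longrightarrow> f k \<ge> c0 * (real A ^ k) powr d"
  shows "\<not> bdd_above (range f)"
proof
  assume "bdd_above (range f)"
  then obtain B where B: "\<And>k. f k \<le> B" by (auto simp: bdd_above_def)
  define Y where "Y = max (max X0 1) (((\<bar>B\<bar> + 1) / c0) powr (1 / d))"
  have "real A > 1" using A by simp
  then obtain k where k: "Y < real A ^ k" using real_arch_pow by blast
  have "k \<ge> 1"
  proof (rule ccontr)
    assume "\<not> k \<ge> 1" then have "k = 0" by simp
    then show False using k by (simp add: Y_def)
  qed
  have X0: "real A ^ k \<ge> X0" using k by (simp add: Y_def)
  have "((\<bar>B\<bar> + 1) / c0) powr (1 / d) < real A ^ k" using k by (simp add: Y_def)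
  then have "(((\<bar>B\<bar> + 1) / c0) powr (1 / d)) powr d \<le> (real A ^ k) powr d"
    using d by (intro powr_mono2) auto
  also have "(((\<bar>B\<bar> + 1) / c0) powr (1 / d)) powr d = (\<bar>B\<bar> + 1) / c0"
    using d c0 by (simp add: powr_powr)
  finally have "c0 * ((\<bar>B\<bar> + 1) / c0) \<le> c0 * (real A ^ k) powr d" using c0 by (simp add: divide_le_eq mult.commute)
  then have "\<bar>B\<bar> + 1 \<le> f k" using f[OF \<open>k \<ge> 1\<close> X0] c0 by simp
  then show False using B[of k] by linarith
qed

lemma bounded_lemma:
  fixes f :: "nat \<Rightarrow> real"
  assumes "\<And>k. k \<ge> 1 \<Longrightarrow> f k \<le> B"
  shows "bdd_above (range f)"
proof -
  have "f k \<le> max B (f 0)" for k using assms[of k] by (cases k) auto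
  then show ?thesis by (auto simp: bdd_above_def)
qed

lemma echar_mult: "echar a x * echar b x = echar (a + b) x"
  unfolding echar_def by (simp add: exp_add[symmetric] algebra_simps)

lemma cnj_echar: "cnj (echar a x) = echar (- a) x"
  unfolding echar_def by (simp add: exp_cnj)

lemma norm_echar [simp]: "norm (echar a x) = 1"
  unfolding echar_def by (simp add: norm_exp_eq_Re)

lemma echar_0 [simp]: "echar 0 x = 1"
  unfolding echar_def by simp

lemma continuous_on_echar [continuous_intros]: "continuous_on S (echar k)"
  unfolding echar_def by (intro continuous_intros)

lemma has_integral_echar:
  "(echar k has_integral (if k = 0 then 1 else 0)) {0..1}"
proof (cases "k = 0")
  case True
  have "echar 0 = (\<lambda>x. 1)" by (rule ext) simp
  then show ?thesis using has_integral_const_real[of "1::complex" 0 1] True by simp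
next
  case False
  define c :: complex where "c = 2 * of_real pi * \<i> * of_int k"
  have c0: "c \<noteq> 0" using False by (simp add: c_def)
  have e: "echar k x = exp (c * of_real x)" for x
    unfolding echar_def c_def by (simp add: mult_ac)
  have "\<And>t. t \<in> {0..1} \<Longrightarrow> ((\<lambda>x. exp (c * x) / c) has_vector_derivative exp (c * t)) (at t within {0..1})"
    using c0
    by (intro derivative_eq_intros has_complex_derivative_imp_has_vector_derivative [unfolded o_def] | simp)+
  then have "((\<lambda>t. exp(c * of_real t)) has_integral exp(c * complex_of_real 1)/c - exp(c * of_real 0)/c) {0..1}"
    by (meson fundamental_theorem_of_calculus zero_le_one)
  moreover have "exp (c * complex_of_real 1) = 1"
    unfolding c_def by (simp add: exp_eq_1)
  ultimately show ?thesis using False by (simp add: e[abs_def])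
qed

lemma has_integral_cechar:
  "((\<lambda>x. c * echar k x) has_integral (if k = 0 then c else 0)) {0..1}"
  using has_integral_mult_right[OF has_integral_echar[of k], of c] by (simp split: if_splits)

lemma lint_eq_integral:
  fixes f :: "real \<Rightarrow> 'b::euclidean_space"
  assumes "continuous_on {0..1} f"
  shows "(LINT x:{0..1}|lborel. f x) = integral {0..1} f"
  by (rule set_borel_integral_eq_integral(2)[OF borel_integrable_atLeastAtMost'[OF assms]])

definition tp :: "nat set \<Rightarrow> (nat \<Rightarrow> real) \<Rightarrow> real \<Rightarrow> complex" where
  "tp M w x = (\<Sum>m\<in>M. of_real (w m) * echar (int (m ^ 2)) x)"

lemma continuous_on_tp [continuous_intros]: "continuous_on S (tp M w)"
  unfolding tp_def by (intro continuous_intros)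

lemma sq_diff_zero_iff: "(int (m ^ 2) - int (n ^ 2) = 0) = (m = n)"
proof
  assume "int (m ^ 2) - int (n ^ 2) = 0"
  then have "int (m ^ 2) = int (n ^ 2)" by linarith
  then have "m ^ 2 = n ^ 2" by (simp only: of_nat_eq_iff)
  then show "m = n" by (rule power_eq_imp_eq_base) auto
qed simp

lemma echar_diff: "echar (a - b) x = echar a x * echar (- b) x"
  by (simp add: echar_mult)

lemma term2: "of_real p * echar a x * cnj (of_real q * echar b x) = of_real (p * q) * echar (a - b) x"
proof -
  have "of_real p * echar a x * cnj (of_real q * echar b x) = of_real (p * q) * (echar a x * echar (- b) x)"
    by (simp add: cnj_echar)
  then show ?thesis by (simp add: echar_mult)
qed

lemma tp_sq_expand:
  "tp M w x * cnj (tp M w x) =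
     (\<Sum>m\<in>M. \<Sum>n\<in>M. of_real (w m * w n) * echar (int (m ^ 2) - int (n ^ 2)) x)"
  unfolding tp_def cnj_sum sum_product
  by (intro sum.cong refl) (simp add: echar_diff cnj_echar mult_ac)

lemma has_integral_tp2:
  assumes "finite M"
  shows "((\<lambda>x. norm (tp M w x) ^ 2) has_integral (\<Sum>m\<in>M. (w m) ^ 2)) {0..1}"
proof -
  have "((\<lambda>x. \<Sum>m\<in>M. \<Sum>n\<in>M. of_real (w m * w n) * echar (int (m ^ 2) - int (n ^ 2)) x) has_integral
        (\<Sum>m\<in>M. \<Sum>n\<in>M. if int (m ^ 2) - int (n ^ 2) = 0 then of_real (w m * w n) else 0)) {0..1}"
    using assms by (intro has_integral_sum has_integral_cechar)
  moreover have "(\<Sum>m\<in>M. \<Sum>n\<in>M. if int (m ^ 2) - int (n ^ 2) = 0 then of_real (w m * w n) else 0)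
      = (\<Sum>m\<in>M. of_real ((w m) ^ 2) :: complex)"
  proof (rule sum.cong[OF refl])
    fix m assume "m \<in> M"
    have "(\<Sum>n\<in>M. if int (m ^ 2) - int (n ^ 2) = 0 then of_real (w m * w n) else 0)
        = (\<Sum>n\<in>M. if m = n then of_real (w m * w n) else (0::complex))"
      by (intro sum.cong refl) (simp only: sq_diff_zero_iff)
    also have "\<dots> = of_real ((w m) ^ 2)" using assms \<open>m \<in> M\<close> by (simp add: power2_eq_square)
    finally show "(\<Sum>n\<in>M. if int (m ^ 2) - int (n ^ 2) = 0 then of_real (w m * w n) else 0)
        = (of_real ((w m) ^ 2) :: complex)" .
  qed
  ultimately have "((\<lambda>x. tp M w x * cnj (tp M w x)) has_integral (\<Sum>m\<in>M. of_real ((w m) ^ 2) :: complex)) {0..1}"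
    by (simp add: tp_sq_expand)
  from has_integral_Re[OF this] show ?thesis
    by (simp add: complex_norm_square[symmetric] flip: of_real_sum)
qed

lemma sq4_zero_iff:
  "(int (a ^ 2) - int (c ^ 2) + (int (b ^ 2) - int (d ^ 2)) = 0) = (a ^ 2 + b ^ 2 = c ^ 2 + d ^ 2)"
proof -
  have "(int (a ^ 2) - int (c ^ 2) + (int (b ^ 2) - int (d ^ 2)) = 0) = (int (a ^ 2 + b ^ 2) = int (c ^ 2 + d ^ 2))"
    by (simp only: of_nat_add) linarith
  also have "\<dots> = (a ^ 2 + b ^ 2 = c ^ 2 + d ^ 2)" by (simp only: of_nat_eq_iff)
  finally show ?thesis .
qed

lemma tp4_expand:
  "of_real (norm (tp M w x) ^ 4) =
     (\<Sum>a\<in>M. \<Sum>b\<in>M. \<Sum>c\<in>M. \<Sum>d\<in>M. of_real (w a * w c * (w b * w d)) *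
         echar (int (a ^ 2) - int (c ^ 2) + (int (b ^ 2) - int (d ^ 2))) x)"
proof -
  have "of_real (norm (tp M w x) ^ 4) = (tp M w x * cnj (tp M w x)) * (tp M w x * cnj (tp M w x))"
    by (simp add: complex_norm_square[symmetric] power_mult[symmetric] power2_eq_square[symmetric])
  also have "\<dots> = (\<Sum>a\<in>M. \<Sum>c\<in>M. of_real (w a * w c) * echar (int (a ^ 2) - int (c ^ 2)) x) *
                   (\<Sum>b\<in>M. \<Sum>d\<in>M. of_real (w b * w d) * echar (int (b ^ 2) - int (d ^ 2)) x)"
    by (simp only: tp_sq_expand)
  also have "\<dots> = (\<Sum>a\<in>M. \<Sum>b\<in>M. (\<Sum>c\<in>M. of_real (w a * w c) * echar (int (a ^ 2) - int (c ^ 2)) x) *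
                   (\<Sum>d\<in>M. of_real (w b * w d) * echar (int (b ^ 2) - int (d ^ 2)) x))"
    by (simp only: sum_product)
  also have "\<dots> = (\<Sum>a\<in>M. \<Sum>b\<in>M. \<Sum>c\<in>M. \<Sum>d\<in>M. of_real (w a * w c) * echar (int (a ^ 2) - int (c ^ 2)) x *
                   (of_real (w b * w d) * echar (int (b ^ 2) - int (d ^ 2)) x))"
    by (simp only: sum_product)
  also have "\<dots> = (\<Sum>a\<in>M. \<Sum>b\<in>M. \<Sum>c\<in>M. \<Sum>d\<in>M. of_real (w a * w c * (w b * w d)) *
         echar (int (a ^ 2) - int (c ^ 2) + (int (b ^ 2) - int (d ^ 2))) x)"
    by (intro sum.cong refl) (simp add: echar_mult[symmetric] mult_ac)
  finally show ?thesis .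
qed

lemma has_integral_tp4:
  assumes "finite M"
  shows "((\<lambda>x. norm (tp M w x) ^ 4) has_integral
     (\<Sum>a\<in>M. \<Sum>b\<in>M. \<Sum>c\<in>M. \<Sum>d\<in>M. if a ^ 2 + b ^ 2 = c ^ 2 + d ^ 2 then w a * w c * (w b * w d) else 0)) {0..1}"
proof -
  have "((\<lambda>x. \<Sum>a\<in>M. \<Sum>b\<in>M. \<Sum>c\<in>M. \<Sum>d\<in>M. of_real (w a * w c * (w b * w d)) *
         echar (int (a ^ 2) - int (c ^ 2) + (int (b ^ 2) - int (d ^ 2))) x) has_integral
     (\<Sum>a\<in>M. \<Sum>b\<in>M. \<Sum>c\<in>M. \<Sum>d\<in>M. if int (a ^ 2) - int (c ^ 2) + (int (b ^ 2) - int (d ^ 2)) = 0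
        then of_real (w a * w c * (w b * w d)) else 0)) {0..1}"
    using assms by (intro has_integral_sum has_integral_cechar)
  then have "((\<lambda>x. of_real (norm (tp M w x) ^ 4) :: complex) has_integral
     of_real (\<Sum>a\<in>M. \<Sum>b\<in>M. \<Sum>c\<in>M. \<Sum>d\<in>M. if a ^ 2 + b ^ 2 = c ^ 2 + d ^ 2 then w a * w c * (w b * w d) else 0)) {0..1}"
    by (simp only: tp4_expand sq4_zero_iff of_real_sum if_distrib[of of_real] of_real_0)
  from has_integral_Re[OF this] show ?thesis by simp
qed

lemma integral_tp4_le:
  assumes "finite M" and w: "\<And>m. m \<in> M \<Longrightarrow> 0 \<le> w m \<and> w m \<le> W"
  shows "integral {0..1} (\<lambda>x. norm (tp M w x) ^ 4) \<le>
     W ^ 4 * (\<Sum>a\<in>M. \<Sum>b\<in>M. \<Sum>c\<in>M. \<Sum>d\<in>M. if a ^ 2 + b ^ 2 = c ^ 2 + d ^ 2 then 1 else 0 :: real)"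
proof -
  have "integral {0..1} (\<lambda>x. norm (tp M w x) ^ 4) =
     (\<Sum>a\<in>M. \<Sum>b\<in>M. \<Sum>c\<in>M. \<Sum>d\<in>M. if a ^ 2 + b ^ 2 = c ^ 2 + d ^ 2 then w a * w c * (w b * w d) else 0)"
    using has_integral_tp4[OF assms(1)] by (rule integral_unique)
  also have "\<dots> \<le> (\<Sum>a\<in>M. \<Sum>b\<in>M. \<Sum>c\<in>M. \<Sum>d\<in>M. W ^ 4 * (if a ^ 2 + b ^ 2 = c ^ 2 + d ^ 2 then 1 else 0))"
  proof (intro sum_mono)
    fix a b c d assume "a \<in> M" "b \<in> M" "c \<in> M" "d \<in> M"
    then have "w a * w c * (w b * w d) \<le> W * W * (W * W)"
      using w by (intro mult_mono) (auto intro: mult_nonneg_nonneg order_trans)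
    then show "(if a ^ 2 + b ^ 2 = c ^ 2 + d ^ 2 then w a * w c * (w b * w d) else 0)
         \<le> W ^ 4 * (if a ^ 2 + b ^ 2 = c ^ 2 + d ^ 2 then 1 else 0)"
      using w \<open>a \<in> M\<close> by (auto simp: power4_eq_xxxx mult_ac intro: order_trans)
  qed
  also have "\<dots> = W ^ 4 * (\<Sum>a\<in>M. \<Sum>b\<in>M. \<Sum>c\<in>M. \<Sum>d\<in>M. if a ^ 2 + b ^ 2 = c ^ 2 + d ^ 2 then 1 else 0 :: real)"
    by (simp add: sum_distrib_left)
  finally show ?thesis .
qed

definition tau :: "nat \<Rightarrow> nat" where "tau n = card {d. d dvd n}"

lemma dvd_prime_pow_mult:
  fixes p :: nat
  assumes "prime p" "d dvd p ^ a * m"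
  shows "\<exists>i e. i \<le> a \<and> e dvd m \<and> d = p ^ i * e"
  using assms(2)
proof (induction a arbitrary: d)
  case 0
  then show ?case by auto
next
  case (Suc a)
  show ?case
  proof (cases "p dvd d")
    case True
    then obtain d' where d': "d = p * d'" by auto
    have "p > 0" using assms(1) prime_gt_0_nat by blast
    from Suc.prems d' have "d' dvd p ^ a * m" using \<open>p > 0\<close> by (simp add: mult.assoc)
    from Suc.IH[OF this] obtain i e where "i \<le> a" "e dvd m" "d' = p ^ i * e" by blast
    then show ?thesis using d' by (intro exI[of _ "Suc i"] exI[of _ e]) auto
  next
    case False
    then have "coprime d p" using assms(1)
      by (meson coprime_commute prime_imp_coprime)
    then have "d dvd p ^ a * m" using Suc.prems
      by (metis coprime_dvd_mult_right_iff mult.assoc power_Suc)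
    from Suc.IH[OF this] show ?thesis using le_SucI by blast
  qed
qed

lemma tau_prime_pow_mult:
  fixes p :: nat
  assumes "prime p" "m > 0"
  shows "tau (p ^ a * m) \<le> (a + 1) * tau m"
proof -
  have "{d. d dvd p ^ a * m} \<subseteq> (\<lambda>(i, e). p ^ i * e) ` ({0..a} \<times> {e. e dvd m})"
  proof
    fix d assume "d \<in> {d. d dvd p ^ a * m}"
    then obtain i e where "i \<le> a" "e dvd m" "d = p ^ i * e"
      using dvd_prime_pow_mult[OF assms(1)] by blast
    then show "d \<in> (\<lambda>(i, e). p ^ i * e) ` ({0..a} \<times> {e. e dvd m})"
      by (intro image_eqI[of _ _ "(i, e)"]) auto
  qed
  then have "card {d. d dvd p ^ a * m} \<le> card ((\<lambda>(i, e). p ^ i * e) ` ({0..a} \<times> {e. e dvd m}))"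
    by (intro card_mono finite_imageI) (auto simp: assms)
  also have "\<dots> \<le> card ({0..a} \<times> {e. e dvd m})" by (rule card_image_le) (auto simp: assms)
  also have "\<dots> = (a + 1) * tau m" by (simp add: card_cartesian_product tau_def)
  finally show ?thesis by (simp add: tau_def)
qed

lemma exp_lin_bound:
  fixes \<epsilon> :: real
  assumes "\<epsilon> > 0"
  shows "\<exists>c\<ge>1. \<forall>a::nat. real a + 1 \<le> c * 2 powr (real a * \<epsilon>)"
proof -
  define t where "t = min 1 (\<epsilon> * ln 2)"
  have t: "t > 0" "t \<le> 1" "t \<le> \<epsilon> * ln 2" using assms by (auto simp: t_def)
  show ?thesis
  proof (intro exI[of _ "1/t"] conjI allI)
    show "1 \<le> 1 / t" using t by simp
    fix a :: nat
    have "2 powr (real a * \<epsilon>) = exp (real a * \<epsilon> * ln 2)" by (simp add: powr_def)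
    also have "\<dots> \<ge> 1 + real a * \<epsilon> * ln 2" by (rule exp_ge_add_one_self)
    finally have e1: "2 powr (real a * \<epsilon>) \<ge> 1 + real a * \<epsilon> * ln 2" .
    moreover have "real a * t \<le> real a * (\<epsilon> * ln 2)" using t by (intro mult_left_mono) auto
    moreover have "real a * t + t \<le> real a * t + 1" using t by simp
    ultimately have "t * (real a + 1) \<le> 2 powr (real a * \<epsilon>)"
      by (simp add: algebra_simps)
    then show "real a + 1 \<le> 1 / t * 2 powr (real a * \<epsilon>)" using t
      by (simp add: field_simps)
  qed
qed

lemma divisor_bound:
  fixes \<epsilon> :: real
  assumes "\<epsilon> > 0"
  shows "\<exists>C>0. \<forall>n>0. real (tau n) \<le> C * real n powr \<epsilon>"
proof -
  obtain c where c1: "c \<ge> 1" and c: "\<And>a::nat. real a + 1 \<le> c * 2 powr (real a * \<epsilon>)"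
    using exp_lin_bound[OF assms] by blast
  define B :: nat where "B = nat \<lceil>2 powr (1 / \<epsilon>)\<rceil>"
  have bigp: "(real p) powr \<epsilon> \<ge> 2" if "p \<ge> B" for p :: nat
  proof -
    have "real p \<ge> 2 powr (1 / \<epsilon>)" using that unfolding B_def by linarith
    then have "real p powr \<epsilon> \<ge> (2 powr (1 / \<epsilon>)) powr \<epsilon>"
      using assms by (intro powr_mono2) auto
    also have "(2 powr (1 / \<epsilon>)) powr \<epsilon> = 2" using assms by (simp add: powr_powr)
    finally show ?thesis .
  qed
  define S where "S n = {p. prime p \<and> p dvd n \<and> p < B}" for n :: nat
  have finS: "finite (S n)" for n unfolding S_def by (rule finite_subset[of _ "{..<B}"]) auto
  have main: "real (tau n) \<le> c ^ card (S n) * real n powr \<epsilon>" if "n > 0" for n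
    using that
  proof (induction n rule: less_induct)
    case (less n)
    show ?case
    proof (cases "n = 1")
      case True
      then show ?thesis using c1 by (simp add: tau_def)
    next
      case False
      then obtain p where p: "prime p" "p dvd n" using prime_factor_nat by blast
      define a where "a = multiplicity p n"
      obtain m where nm: "n = p ^ a * m" and ndvd: "\<not> p dvd m"
      proof (rule multiplicity_decompose'[of n p])
        show "n \<noteq> 0" using less.prems by simp
        show "\<not> is_unit p" using p(1) prime_gt_1_nat by fastforce
      qed (auto simp: a_def)
      have p1: "p > 1" using p prime_gt_1_nat by blast
      have a1: "a \<ge> 1" unfolding a_def using p less.prems
        by (simp add: Suc_le_eq prime_multiplicity_gt_zero_iff)
      have m0: "m > 0" using nm less.prems by (cases "m = 0") auto
      have "p ^ a > 1" using p1 a1 by (metis one_less_power One_nat_def Suc_le_eq)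
      then have mn: "m < n" using nm m0 by simp
      have IH: "real (tau m) \<le> c ^ card (S m) * real m powr \<epsilon>" using less.IH[OF mn m0] .
      have Ssub: "S m \<subseteq> S n" unfolding S_def using nm by auto
      have t1: "real (tau n) \<le> (real a + 1) * real (tau m)"
        using tau_prime_pow_mult[OF p(1) m0, of a] nm by (metis of_nat_Suc of_nat_le_iff of_nat_mult Suc_eq_plus1 add.commute)
      have npow: "real n powr \<epsilon> = real p powr (real a * \<epsilon>) * real m powr \<epsilon>"
        using nm p1 by (simp add: powr_mult powr_powr powr_realpow[symmetric] mult.commute)
      show ?thesis
      proof (cases "p < B")
        case True
        have "p \<in> S n" "p \<notin> S m" using True p ndvd by (auto simp: S_def)
        then have "insert p (S m) \<subseteq> S n" using Ssub by auto
        then have "card (insert p (S m)) \<le> card (S n)" using finS by (intro card_mono) auto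
        then have cs: "Suc (card (S m)) \<le> card (S n)" using \<open>p \<notin> S m\<close> finS by simp
        have aa: "real a + 1 \<le> c * real p powr (real a * \<epsilon>)"
        proof -
          have "2 powr (real a * \<epsilon>) \<le> real p powr (real a * \<epsilon>)"
            using p1 assms by (intro powr_mono2) auto
          then have "c * 2 powr (real a * \<epsilon>) \<le> c * real p powr (real a * \<epsilon>)"
            using c1 by (intro mult_left_mono) auto
          then show ?thesis using c[of a] by linarith
        qed
        have "real (tau n) \<le> (c * real p powr (real a * \<epsilon>)) * (c ^ card (S m) * real m powr \<epsilon>)"
          using t1 mult_mono[OF aa IH] c1 by simp
        also have "\<dots> = c ^ Suc (card (S m)) * real n powr \<epsilon>" by (simp add: npow)
        also have "\<dots> \<le> c ^ card (S n) * real n powr \<epsilon>"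
          using cs c1 by (intro mult_right_mono power_increasing) auto
        finally show ?thesis .
      next
        case False
        have "real a + 1 \<le> 2 ^ a" 
        proof (induction a)
          case (Suc a) then show ?case by simp
        qed simp
        also have "(2::real) ^ a = 2 powr real a" by (simp add: powr_realpow)
        also have "\<dots> \<le> (real p powr \<epsilon>) powr real a"
          using bigp[of p] False by (intro powr_mono2) auto
        also have "\<dots> = real p powr (real a * \<epsilon>)" by (simp add: powr_powr mult.commute)
        finally have aa: "real a + 1 \<le> real p powr (real a * \<epsilon>)" .
        have "real (tau n) \<le> real p powr (real a * \<epsilon>) * (c ^ card (S m) * real m powr \<epsilon>)"
          using t1 mult_mono[OF aa IH] by simp
        also have "\<dots> = c ^ card (S m) * real n powr \<epsilon>" by (simp add: npow)
        also have "\<dots> \<le> c ^ card (S n) * real n powr \<epsilon>"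
          using card_mono[OF finS Ssub] c1 by (intro mult_right_mono power_increasing) auto
        finally show ?thesis .
      qed
    qed
  qed
  show ?thesis
  proof (intro exI[of _ "c ^ B"] conjI allI impI)
    show "c ^ B > 0" using c1 by simp
    fix n :: nat assume "n > 0"
    have "card (S n) \<le> B"
      using card_mono[of "{..<B}" "S n"] by (auto simp: S_def)
    then have "c ^ card (S n) \<le> c ^ B" using c1 by (intro power_increasing) auto
    then show "real (tau n) \<le> c ^ B * real n powr \<epsilon>"
      using main[OF \<open>n > 0\<close>] mult_right_mono[of "c ^ card (S n)" "c ^ B" "real n powr \<epsilon>"] by simp
  qed
qed

lemma card_pairs_sq_diff:
  fixes M :: "nat set" and h :: nat
  assumes "h > 0"
  shows "card {(x, y). x \<in> M \<and> y \<in> M \<and> y ^ 2 = x ^ 2 + h} \<le> tau h"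
proof -
  let ?S = "{(x, y). x \<in> M \<and> y \<in> M \<and> y ^ 2 = x ^ 2 + h}"
  have key: "\<exists>d. y = x + d \<and> h = d * (2 * x + d) \<and> d > 0" if "y ^ 2 = x ^ 2 + h" for x y :: nat
  proof -
    have "x ^ 2 < y ^ 2" using that assms by simp
    then have "x < y" using power_less_imp_less_base by blast
    then obtain d where d: "y = x + d" "d > 0" using less_imp_add_positive by blast
    then have "h = d * (2 * x + d)" using that by (simp add: power2_eq_square algebra_simps)
    then show ?thesis using d by blast
  qed
  have inj: "inj_on (\<lambda>(x, y). y - x) ?S"
  proof (rule inj_onI, clarify)
    fix x y x' y'
    assume a: "x \<in> M" "y \<in> M" "y ^ 2 = x ^ 2 + h" "x' \<in> M" "y' \<in> M" "y' ^ 2 = x' ^ 2 + h"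
       and e: "y - x = y' - x'"
    obtain d where d: "y = x + d" "h = d * (2 * x + d)" "d > 0" using key[OF a(3)] by blast
    obtain d' where d': "y' = x' + d'" "h = d' * (2 * x' + d')" "d' > 0" using key[OF a(6)] by blast
    have "d = d'" using e d d' by simp
    then have "2 * x + d = 2 * x' + d" using d(2) d'(2) d(3) by simp
    then have "x = x'" by simp
    then show "x = x' \<and> y = y'" using d d' \<open>d = d'\<close> by simp
  qed
  have img: "(\<lambda>(x, y). y - x) ` ?S \<subseteq> {d. d dvd h}"
  proof clarify
    fix x y assume "x \<in> M" "y \<in> M" "y ^ 2 = x ^ 2 + h"
    then obtain d where "y = x + d" "h = d * (2 * x + d)" using key by blast
    then show "y - x dvd h" by simp
  qed
  have "card ?S \<le> card {d. d dvd h}"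
    by (rule card_inj_on_le[OF inj img]) (simp add: assms)
  then show ?thesis by (simp add: tau_def)
qed

lemma card_pairs_sq_diff':
  fixes M :: "nat set" and h :: nat
  assumes "h > 0"
  shows "card {(y, x). x \<in> M \<and> y \<in> M \<and> y ^ 2 = x ^ 2 + h} \<le> tau h"
proof -
  let ?S = "{(y, x). x \<in> M \<and> y \<in> M \<and> y ^ 2 = x ^ 2 + h}"
  have key: "\<exists>d. y = x + d \<and> h = d * (2 * x + d) \<and> d > 0" if "y ^ 2 = x ^ 2 + h" for x y :: nat
  proof -
    have "x ^ 2 < y ^ 2" using that assms by simp
    then have "x < y" using power_less_imp_less_base by blast
    then obtain d where d: "y = x + d" "d > 0" using less_imp_add_positive by blast
    then have "h = d * (2 * x + d)" using that by (simp add: power2_eq_square algebra_simps)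
    then show ?thesis using d by blast
  qed
  have inj: "inj_on (\<lambda>(y, x). y - x) ?S"
  proof (rule inj_onI, clarify)
    fix y x y' x'
    assume a: "x \<in> M" "y \<in> M" "y ^ 2 = x ^ 2 + h" "x' \<in> M" "y' \<in> M" "y' ^ 2 = x' ^ 2 + h"
       and e: "y - x = y' - x'"
    obtain d where d: "y = x + d" "h = d * (2 * x + d)" "d > 0" using key[OF a(3)] by blast
    obtain d' where d': "y' = x' + d'" "h = d' * (2 * x' + d')" "d' > 0" using key[OF a(6)] by blast
    have "d = d'" using e d d' by simp
    then have "2 * x + d = 2 * x' + d" using d(2) d'(2) d(3) by simp
    then have "x = x'" by simp
    then show "y = y' \<and> x = x'" using d d' \<open>d = d'\<close> by simp
  qed
  have img: "(\<lambda>(y, x). y - x) ` ?S \<subseteq> {d. d dvd h}"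
  proof clarify
    fix y x assume "x \<in> M" "y \<in> M" "y ^ 2 = x ^ 2 + h"
    then obtain d where "y = x + d" "h = d * (2 * x + d)" using key by blast
    then show "y - x dvd h" by simp
  qed
  have "card ?S \<le> card {d. d dvd h}"
    by (rule card_inj_on_le[OF inj img]) (simp add: assms)
  then show ?thesis by (simp add: tau_def)
qed

lemma count_sol:
  fixes M :: "nat set" and D :: real
  assumes M: "finite M" "M \<subseteq> {1..K}" and D: "\<And>h. 0 < h \<Longrightarrow> h \<le> K ^ 2 \<Longrightarrow> real (tau h) \<le> D"
    and D0: "D \<ge> 0"
  shows "(\<Sum>a\<in>M. \<Sum>b\<in>M. \<Sum>c\<in>M. \<Sum>d\<in>M. if a ^ 2 + b ^ 2 = c ^ 2 + d ^ 2 then 1 else 0 :: real)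
         \<le> real (card M) ^ 2 * (1 + D)"
proof -
  have inner: "(\<Sum>b\<in>M. \<Sum>d\<in>M. if a ^ 2 + b ^ 2 = c ^ 2 + d ^ 2 then 1 else 0 :: real)
      \<le> (if a = c then real (card M) else D)" if ac: "a \<in> M" "c \<in> M" for a c
  proof -
    have "(\<Sum>b\<in>M. \<Sum>d\<in>M. if a ^ 2 + b ^ 2 = c ^ 2 + d ^ 2 then 1 else 0 :: real)
        = (\<Sum>bd\<in>M \<times> M. if a ^ 2 + fst bd ^ 2 = c ^ 2 + snd bd ^ 2 then 1 else 0)"
      by (simp add: sum.cartesian_product split_beta)
    also have "\<dots> = real (card {bd \<in> M \<times> M. a ^ 2 + fst bd ^ 2 = c ^ 2 + snd bd ^ 2})"
      using M(1) by (simp add: sum.If_cases Int_def)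
    finally have eq: "(\<Sum>b\<in>M. \<Sum>d\<in>M. if a ^ 2 + b ^ 2 = c ^ 2 + d ^ 2 then 1 else 0 :: real)
       = real (card {bd \<in> M \<times> M. a ^ 2 + fst bd ^ 2 = c ^ 2 + snd bd ^ 2})" .
    have aK: "a \<le> K" "c \<le> K" "a \<ge> 1" "c \<ge> 1" using ac M(2) by auto
    consider "a = c" | "a > c" | "a < c" by linarith
    then have "real (card {bd \<in> M \<times> M. a ^ 2 + fst bd ^ 2 = c ^ 2 + snd bd ^ 2}) \<le> (if a = c then real (card M) else D)"
    proof cases
      case 1
      then have "{bd \<in> M \<times> M. a ^ 2 + fst bd ^ 2 = c ^ 2 + snd bd ^ 2} = (\<lambda>b. (b, b)) ` M"
        by auto
      then show ?thesis using card_image_le[OF M(1), of "\<lambda>b. (b, b)"] D0 \<open>a = c\<close> by simp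
    next
      case 2
      define h where "h = a ^ 2 - c ^ 2"
      have hpos: "h > 0" unfolding h_def using 2 power_strict_mono[of c a 2] by simp
      have hK: "h \<le> K ^ 2" unfolding h_def using aK power_mono[of a K 2] by (simp add: le_diff_conv trans_le_add1)
      have "{bd \<in> M \<times> M. a ^ 2 + fst bd ^ 2 = c ^ 2 + snd bd ^ 2}
          = {(x, y). x \<in> M \<and> y \<in> M \<and> y ^ 2 = x ^ 2 + h}"
        using 2 power_strict_mono[of c a 2] unfolding h_def by auto
      then show ?thesis using card_pairs_sq_diff[OF hpos, of M] D[OF hpos hK] 2
        by simp
    next
      case 3
      define h where "h = c ^ 2 - a ^ 2"
      have hpos: "h > 0" unfolding h_def using 3 power_strict_mono[of a c 2] by simp
      have hK: "h \<le> K ^ 2" unfolding h_def using aK power_mono[of c K 2] by (simp add: le_diff_conv trans_le_add1)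
      have "{bd \<in> M \<times> M. a ^ 2 + fst bd ^ 2 = c ^ 2 + snd bd ^ 2}
          = {(y, x). x \<in> M \<and> y \<in> M \<and> y ^ 2 = x ^ 2 + h}"
        using 3 power_strict_mono[of a c 2] unfolding h_def by auto
      then show ?thesis using card_pairs_sq_diff'[OF hpos, of M] D[OF hpos hK] 3
        by simp
    qed
    then show ?thesis using eq by simp
  qed
  have "(\<Sum>a\<in>M. \<Sum>b\<in>M. \<Sum>c\<in>M. \<Sum>d\<in>M. if a ^ 2 + b ^ 2 = c ^ 2 + d ^ 2 then 1 else 0 :: real)
      = (\<Sum>a\<in>M. \<Sum>c\<in>M. \<Sum>b\<in>M. \<Sum>d\<in>M. if a ^ 2 + b ^ 2 = c ^ 2 + d ^ 2 then 1 else 0 :: real)"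
    by (rule sum.cong[OF refl], rule sum.swap)
  also have "\<dots> \<le> (\<Sum>a\<in>M. \<Sum>c\<in>M. (if a = c then real (card M) else 0) + D)"
    using D0 by (intro sum_mono order_trans[OF inner]) auto
  also have "\<dots> = (\<Sum>a\<in>M. real (card M) + real (card M) * D)"
    using M(1) by (simp add: sum.distrib)
  also have "\<dots> = real (card M) ^ 2 * (1 + D)" by (simp add: power2_eq_square algebra_simps)
  finally show ?thesis .
qed

context
  fixes f :: "real \<Rightarrow> real"
  assumes fc: "continuous_on {0..1} f" and f0: "\<And>x. 0 \<le> f x"
begin

lemma powr_cont: "q > 0 \<Longrightarrow> continuous_on {0..1} (\<lambda>x. f x powr q)"
  by (intro continuous_on_powr' fc continuous_on_const) (auto simp: f0)

lemma powr_int: "q > 0 \<Longrightarrow> (\<lambda>x. f x powr q) integrable_on {0..1}"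
  by (intro integrable_continuous_interval powr_cont)

lemma interp_H1:
  assumes p: "0 < p" "p \<le> 4" and l: "l > 0" and J4: "integral {0..1} (\<lambda>x. f x powr 4) \<le> l powr 4"
  shows "integral {0..1} (\<lambda>x. f x powr p) \<le> 2 * l powr p"
proof -
  have pt: "f x powr p \<le> l powr p + l powr (p - 4) * f x powr 4" for x
  proof (cases "f x \<le> l")
    case True
    then have "f x powr p \<le> l powr p" using p f0[of x] by (intro powr_mono2) auto
    moreover have "0 \<le> l powr (p - 4) * f x powr 4" by simp
    ultimately show ?thesis by linarith
  next
    case False
    then have fx: "f x > 0" using l by linarith
    have "f x powr p = f x powr 4 * f x powr (p - 4)" using fx by (subst powr_add[symmetric]) simp
    also have "\<dots> \<le> f x powr 4 * l powr (p - 4)"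
      using False p l by (intro mult_left_mono powr_mono2') auto
    finally show ?thesis by (simp add: mult.commute add_increasing)
  qed
  have "integral {0..1} (\<lambda>x. f x powr p) \<le> integral {0..1} (\<lambda>x. l powr p + l powr (p - 4) * f x powr 4)"
    using p by (intro integral_le powr_int integrable_add integrable_on_mult_right integrable_const_ivl pt) auto
  also have "\<dots> = l powr p + l powr (p - 4) * integral {0..1} (\<lambda>x. f x powr 4)"
    by (subst integral_add) (auto intro!: powr_int integrable_on_mult_right simp: integral_mult_right)
  also have "\<dots> \<le> l powr p + l powr (p - 4) * l powr 4"
    using J4 by (intro add_left_mono mult_left_mono) auto
  also have "\<dots> = 2 * l powr p" using l by (subst powr_add[symmetric]) simp
  finally show ?thesis .
qed

lemma interp_H2:
  assumes p: "4 < p" and B: "\<And>x. x \<in> {0..1} \<Longrightarrow> f x \<le> B"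
  shows "integral {0..1} (\<lambda>x. f x powr p) \<le> B powr (p - 4) * integral {0..1} (\<lambda>x. f x powr 4)"
proof -
  have pt: "f x powr p \<le> B powr (p - 4) * f x powr 4" if "x \<in> {0..1}" for x
  proof (cases "f x = 0")
    case True then show ?thesis by simp
  next
    case False
    then have fx: "f x > 0" using f0[of x] by linarith
    have "f x powr p = f x powr (p - 4) * f x powr 4" using fx by (subst powr_add[symmetric]) simp
    also have "\<dots> \<le> B powr (p - 4) * f x powr 4"
      using B[OF that] p fx by (intro mult_right_mono powr_mono2) auto
    finally show ?thesis .
  qed
  have "integral {0..1} (\<lambda>x. f x powr p) \<le> integral {0..1} (\<lambda>x. B powr (p - 4) * f x powr 4)"
    using p by (intro integral_le powr_int integrable_on_mult_right pt) auto
  also have "\<dots> = B powr (p - 4) * integral {0..1} (\<lambda>x. f x powr 4)"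
    by (simp add: integral_mult_right)
  finally show ?thesis .
qed

lemma interp_H3:
  assumes p: "0 < p" "p \<le> 2" and l: "l > 0"
  shows "integral {0..1} (\<lambda>x. f x powr 2) \<le>
     l powr (2 - p) * integral {0..1} (\<lambda>x. f x powr p) + l powr (-2) * integral {0..1} (\<lambda>x. f x powr 4)"
proof -
  have pt: "f x powr 2 \<le> l powr (2 - p) * f x powr p + l powr (-2) * f x powr 4" for x
  proof (cases "f x \<le> l")
    case True
    show ?thesis
    proof (cases "f x = 0")
      case True then show ?thesis by simp
    next
      case False
      then have fx: "f x > 0" using f0[of x] by linarith
      have "f x powr 2 = f x powr (2 - p) * f x powr p" using fx by (subst powr_add[symmetric]) simp
      also have "\<dots> \<le> l powr (2 - p) * f x powr p"
        using True p fx by (intro mult_right_mono powr_mono2) auto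
      finally show ?thesis by (simp add: add_increasing2)
    qed
  next
    case False
    then have fx: "f x > 0" using l by linarith
    have "f x powr 2 = f x powr 4 * f x powr (-2)" using fx by (subst powr_add[symmetric]) simp
    also have "\<dots> \<le> f x powr 4 * l powr (-2)"
      using False l by (intro mult_left_mono powr_mono2') auto
    finally show ?thesis by (simp add: mult.commute add_increasing)
  qed
  have "integral {0..1} (\<lambda>x. f x powr 2) \<le>
      integral {0..1} (\<lambda>x. l powr (2 - p) * f x powr p + l powr (-2) * f x powr 4)"
    using p by (intro integral_le powr_int integrable_add integrable_on_mult_right pt) auto
  also have "\<dots> = l powr (2 - p) * integral {0..1} (\<lambda>x. f x powr p) + l powr (-2) * integral {0..1} (\<lambda>x. f x powr 4)"
    using p by (subst integral_add) (auto intro!: powr_int integrable_on_mult_right simp: integral_mult_right)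
  finally show ?thesis .
qed

lemma interp_H4:
  assumes p: "2 \<le> p" and m: "m > 0"
  shows "integral {0..1} (\<lambda>x. f x powr 2) \<le> m powr 2 + m powr (2 - p) * integral {0..1} (\<lambda>x. f x powr p)"
proof -
  have p0: "p > 0" using p by simp
  have pt: "f x powr 2 \<le> m powr 2 + m powr (2 - p) * f x powr p" for x
  proof (cases "f x \<le> m")
    case True
    then have "f x powr 2 \<le> m powr 2" using f0[of x] by (intro powr_mono2) auto
    then show ?thesis by (simp add: add_increasing2)
  next
    case False
    then have fx: "f x > 0" using m by linarith
    have "f x powr 2 = f x powr p * f x powr (2 - p)" using fx by (subst powr_add[symmetric]) simp
    also have "\<dots> \<le> f x powr p * m powr (2 - p)"
      using False p m by (intro mult_left_mono powr_mono2') auto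
    finally show ?thesis by (simp add: mult.commute add_increasing)
  qed
  have "integral {0..1} (\<lambda>x. f x powr 2) \<le> integral {0..1} (\<lambda>x. m powr 2 + m powr (2 - p) * f x powr p)"
    using p0 by (intro integral_le powr_int integrable_add integrable_on_mult_right integrable_const_ivl pt) auto
  also have "\<dots> = m powr 2 + m powr (2 - p) * integral {0..1} (\<lambda>x. f x powr p)"
    using p0 by (subst integral_add) (auto intro!: powr_int integrable_on_mult_right simp: integral_mult_right)
  finally show ?thesis .
qed

lemma interp_H5:
  assumes p: "0 < p" and d: "0 < d" "d \<le> 1" and b: "0 \<le> b" and fb: "\<And>x. x \<in> {0..d} \<Longrightarrow> b \<le> f x"
  shows "d * b powr p \<le> integral {0..1} (\<lambda>x. f x powr p)"
proof -
  have "d * b powr p = integral {0..d} (\<lambda>x. b powr p)" using d by simp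
  also have "\<dots> \<le> integral {0..d} (\<lambda>x. f x powr p)"
  proof (intro integral_le integrable_const_ivl)
    show "(\<lambda>x. f x powr p) integrable_on {0..d}"
      by (rule integrable_on_subinterval[OF powr_int[OF p]]) (use d in auto)
    show "\<And>x. x \<in> {0..d} \<Longrightarrow> b powr p \<le> f x powr p" using fb b p by (intro powr_mono2) auto
  qed
  also have "\<dots> \<le> integral {0..1} (\<lambda>x. f x powr p)"
  proof (rule integral_subset_le)
    show "(\<lambda>x. f x powr p) integrable_on {0..d}"
      by (rule integrable_on_subinterval[OF powr_int[OF p]]) (use d in auto)
  qed (use d powr_int[OF p] in auto)
  finally show ?thesis .
qed

end

definition cR :: "real \<Rightarrow> nat \<Rightarrow> real" where
  "cR s m = real (Suc m) powr (-2 * s)"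

lemma summable_cR: "s > 1/2 \<Longrightarrow> summable (cR s)"
proof -
  assume s: "s > 1/2"
  have "summable (\<lambda>n. real n powr (-2 * s))" using s by (subst summable_real_powr_iff) simp
  then show ?thesis unfolding cR_def by (rule summable_Suc_iff[of "\<lambda>n. real n powr (-2 * s)", THEN iffD2])
qed

lemma R_fun_alt: "R_fun s x = (\<Sum>m. of_real (cR s m) * echar (int ((Suc m)^2)) x)"
  unfolding R_fun_def cR_def ..

lemma fourier_coeff_R:
  assumes s: "s > 1/2"
  shows "fourier_coeff (R_fun s) n = (\<Sum>i. if int ((Suc i)^2) = n then of_real (cR s i) else 0)"
proof -
  define F where "F i x = indicator {0..1} x *\<^sub>R (of_real (cR s i) * echar (int ((Suc i)^2) - n) x)" for i x
  have cR0: "cR s i \<ge> 0" for i by (simp add: cR_def)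
  have sumc: "summable (cR s)" using summable_cR[OF s] .
  have normF: "norm (F i x) = indicator {0..1} x * cR s i" for i x
    using cR0 by (simp add: F_def indicator_def norm_mult)
  have pt: "indicator {0..1} x *\<^sub>R (R_fun s x * cnj (echar n x)) = (\<Sum>i. F i x)" for x
  proof -
    have sm: "summable (\<lambda>i. of_real (cR s i) * echar (int ((Suc i)^2)) x)"
      by (rule summable_norm_cancel) (simp add: norm_mult cR0 sumc)
    have "R_fun s x * cnj (echar n x) = (\<Sum>i. of_real (cR s i) * echar (int ((Suc i)^2)) x * cnj (echar n x))"
      unfolding R_fun_alt using sm by (rule suminf_mult2)
    also have "\<dots> = (\<Sum>i. of_real (cR s i) * echar (int ((Suc i)^2) - n) x)"
      by (simp add: cnj_echar mult.assoc echar_mult)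
    finally have e1: "R_fun s x * cnj (echar n x) = (\<Sum>i. of_real (cR s i) * echar (int ((Suc i)^2) - n) x)" .
    have sm2: "summable (\<lambda>i. of_real (cR s i) * echar (int ((Suc i)^2) - n) x)"
      by (rule summable_norm_cancel) (simp add: norm_mult cR0 sumc)
    show ?thesis unfolding F_def e1 by (rule suminf_scaleR_right[OF sm2])
  qed
  have intF: "integrable lborel (F i)" for i
  proof -
    have "set_integrable lborel {0..1} (\<lambda>x. of_real (cR s i) * echar (int ((Suc i)^2) - n) x)"
      by (intro borel_integrable_atLeastAtMost' continuous_intros)
    then show ?thesis unfolding set_integrable_def F_def .
  qed
  have intnormF: "(\<integral>x. norm (F i x) \<partial>lborel) = cR s i" for i
  proof -
    have "(\<lambda>x. norm (F i x)) = (\<lambda>x. indicator {0..1} x *\<^sub>R cR s i)" by (rule ext) (simp add: normF)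
    then have "(\<integral>x. norm (F i x) \<partial>lborel) = (LINT x:{0..1::real}|lborel. cR s i)"
      unfolding set_lebesgue_integral_def by (rule arg_cong)
    also have "\<dots> = integral {0..1::real} (\<lambda>x. cR s i)" by (rule lint_eq_integral) (intro continuous_intros)
    finally show ?thesis by simp
  qed
  have intFi: "(\<integral>x. F i x \<partial>lborel) = (if int ((Suc i)^2) = n then of_real (cR s i) else 0)" for i
  proof -
    have "(\<integral>x. F i x \<partial>lborel) = (LINT x:{0..1}|lborel. of_real (cR s i) * echar (int ((Suc i)^2) - n) x)"
      unfolding set_lebesgue_integral_def F_def ..
    also have "\<dots> = integral {0..1} (\<lambda>x. of_real (cR s i) * echar (int ((Suc i)^2) - n) x)"
      by (rule lint_eq_integral) (intro continuous_intros)
    also have "\<dots> = (if int ((Suc i)^2) - n = 0 then of_real (cR s i) else 0)"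
      by (rule integral_unique[OF has_integral_cechar])
    finally show ?thesis by simp
  qed
  have "fourier_coeff (R_fun s) n = (\<integral>x. (\<Sum>i. F i x) \<partial>lborel)"
    unfolding fourier_coeff_def set_lebesgue_integral_def pt ..
  also have "\<dots> = (\<Sum>i. (\<integral>x. F i x \<partial>lborel))"
  proof (rule integral_suminf)
    show "integrable lborel (F i)" for i by (rule intF)
    show "AE x in lborel. summable (\<lambda>i. norm (F i x))"
      by (intro AE_I2) (simp add: normF summable_mult sumc)
    show "summable (\<lambda>i. \<integral>x. norm (F i x) \<partial>lborel)" by (simp add: intnormF sumc)
  qed
  also have "\<dots> = (\<Sum>i. if int ((Suc i)^2) = n then of_real (cR s i) else 0)"
    by (simp add: intFi)
  finally show ?thesis .
qed

lemma fourier_coeff_R_sq: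
  assumes s: "s > 1/2" and m: "m \<ge> 1"
  shows "fourier_coeff (R_fun s) (int (m^2)) = of_real (real m powr (-2 * s))"
proof -
  obtain j where j: "m = Suc j" using m by (cases m) auto
  have "(\<lambda>i. if int ((Suc i)^2) = int (m^2) then of_real (cR s i) else 0) =
        (\<lambda>i. if i = j then of_real (cR s i) else (0::complex))"
  proof (rule ext)
    fix i
    have "(int ((Suc i)^2) = int (m^2)) = (i = j)"
    proof
      assume "int ((Suc i)^2) = int (m^2)"
      then have "(Suc i)^2 = m^2" by (simp only: of_nat_eq_iff)
      then have "Suc i = m" by (rule power_eq_imp_eq_base) auto
      then show "i = j" using j by simp
    qed (simp add: j)
    then show "(if int ((Suc i)^2) = int (m^2) then of_real (cR s i) else 0) =
        (if i = j then of_real (cR s i) else (0::complex))" by simp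
  qed
  then show ?thesis using sums_unique[OF sums_single[of j "\<lambda>i. of_real (cR s i) :: complex"]]
    by (simp add: fourier_coeff_R[OF s] cR_def j)
qed

lemma fourier_coeff_R_nonsq:
  assumes s: "s > 1/2" and n: "\<And>m. m \<ge> 1 \<Longrightarrow> n \<noteq> int (m^2)"
  shows "fourier_coeff (R_fun s) n = 0"
proof -
  have "(\<lambda>i. if int ((Suc i)^2) = n then of_real (cR s i) else 0) = (\<lambda>i. 0::complex)"
    using n[of "Suc _"] by (intro ext) auto
  then show ?thesis by (simp add: fourier_coeff_R[OF s])
qed

definition Mset :: "nat \<Rightarrow> nat \<Rightarrow> nat set" where
  "Mset A k = {m. m \<ge> 1 \<and> int (m^2) \<in> LP_block_set A k}"

lemma finite_LP_block_set: "finite (LP_block_set A k)"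
proof -
  have "LP_block_set A k \<subseteq> {- (int A ^ (k+1)) .. int A ^ (k+1)}"
    unfolding LP_block_set_def by (auto simp: abs_less_iff)
  then show ?thesis by (rule finite_subset) simp
qed

lemma finite_Mset: "finite (Mset A k)"
proof -
  have "(\<lambda>m. int (m^2)) ` Mset A k \<subseteq> LP_block_set A k" unfolding Mset_def by auto
  moreover have "inj_on (\<lambda>m. int (m^2)) (Mset A k)"
    by (intro inj_onI) (auto dest: power_eq_imp_eq_base simp only: of_nat_eq_iff)
  ultimately show ?thesis using finite_LP_block_set
    by (metis finite_imageD finite_subset)
qed

lemma LP_block_R:
  assumes s: "s > 1/2"
  shows "LP_block A k (R_fun s) x = tp (Mset A k) (\<lambda>m. real m powr (-2 * s)) x"
proof -
  let ?g = "\<lambda>m::nat. int (m^2)"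
  have inj: "inj_on ?g (Mset A k)"
    by (intro inj_onI) (auto dest: power_eq_imp_eq_base simp only: of_nat_eq_iff)
  have "tp (Mset A k) (\<lambda>m. real m powr (-2 * s)) x = (\<Sum>m\<in>Mset A k. fourier_coeff (R_fun s) (?g m) * echar (?g m) x)"
    unfolding tp_def
  proof (intro sum.cong refl)
    fix m assume "m \<in> Mset A k"
    then have "m \<ge> 1" by (simp add: Mset_def)
    show "of_real (real m powr (-2 * s)) * echar (int (m^2)) x = fourier_coeff (R_fun s) (?g m) * echar (?g m) x"
      by (simp only: fourier_coeff_R_sq[OF s \<open>m \<ge> 1\<close>])
  qed
  also have "\<dots> = (\<Sum>n\<in>?g ` Mset A k. fourier_coeff (R_fun s) n * echar n x)"
    using sum.reindex[OF inj, of "\<lambda>n. fourier_coeff (R_fun s) n * echar n x"] by simp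
  also have "\<dots> = (\<Sum>n\<in>LP_block_set A k. fourier_coeff (R_fun s) n * echar n x)"
  proof (rule sum.mono_neutral_left[OF finite_LP_block_set])
    show "?g ` Mset A k \<subseteq> LP_block_set A k" unfolding Mset_def by auto
    show "\<forall>n\<in>LP_block_set A k - ?g ` Mset A k. fourier_coeff (R_fun s) n * echar n x = 0"
    proof
      fix n assume n: "n \<in> LP_block_set A k - ?g ` Mset A k"
      have "fourier_coeff (R_fun s) n = 0"
      proof (rule fourier_coeff_R_nonsq[OF s])
        fix m :: nat assume "m \<ge> 1"
        then show "n \<noteq> int (m^2)" using n unfolding Mset_def by auto
      qed
      then show "fourier_coeff (R_fun s) n * echar n x = 0" by simp
    qed
  qed
  finally show ?thesis unfolding LP_block_def by simp
qed

lemma norm_tp_le: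
  assumes "\<And>m. m \<in> M \<Longrightarrow> w m \<ge> 0"
  shows "norm (tp M w x) \<le> (\<Sum>m\<in>M. w m)"
proof -
  have "norm (tp M w x) \<le> (\<Sum>m\<in>M. norm (of_real (w m) * echar (int (m ^ 2)) x))"
    unfolding tp_def by (rule norm_sum)
  also have "\<dots> = (\<Sum>m\<in>M. w m)" using assms by (intro sum.cong refl) (simp add: norm_mult)
  finally show ?thesis .
qed

lemma Re_echar: "Re (echar n x) = cos (2 * pi * real_of_int n * x)"
  unfolding echar_def by (simp add: Re_exp mult_ac)

lemma norm_tp_ge:
  assumes w: "\<And>m. m \<in> M \<Longrightarrow> w m \<ge> 0" and Q: "\<And>m. m \<in> M \<Longrightarrow> real m ^ 2 \<le> Q"
    and x: "0 \<le> x" "x \<le> 1 / (6 * Q)" and Q0: "Q > 0"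
  shows "norm (tp M w x) \<ge> (\<Sum>m\<in>M. w m) / 2"
proof -
  have "Re (tp M w x) = (\<Sum>m\<in>M. w m * cos (2 * pi * real (m ^ 2) * x))"
    unfolding tp_def by (simp add: Re_echar)
  also have "\<dots> \<ge> (\<Sum>m\<in>M. w m * (1/2))"
  proof (intro sum_mono mult_left_mono w)
    fix m assume m: "m \<in> M"
    have "2 * pi * real (m ^ 2) * x \<le> 2 * pi * Q * (1 / (6 * Q))"
      using Q[OF m] x Q0 by (intro mult_mono) (auto intro: mult_left_mono)
    also have "\<dots> = pi / 3" using Q0 by simp
    finally have le: "2 * pi * real (m ^ 2) * x \<le> pi / 3" .
    have "cos (pi / 3) \<le> cos (2 * pi * real (m ^ 2) * x)"
      using le x by (intro cos_monotone_0_pi_le) auto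
    then show "1 / 2 \<le> cos (2 * pi * real (m ^ 2) * x)" by (simp add: cos_60)
  qed
  finally have "(\<Sum>m\<in>M. w m) / 2 \<le> Re (tp M w x)" by (simp add: sum_divide_distrib[symmetric])
  also have "\<dots> \<le> norm (tp M w x)" by (rule complex_Re_le_cmod)
  finally show ?thesis .
qed

lemma Mset_mem:
  assumes "k \<ge> 1"
  shows "m \<in> Mset A k \<longleftrightarrow> real A ^ k \<le> real m ^ 2 \<and> real m ^ 2 < real A ^ (k + 1)"
proof -
  have k0: "k \<noteq> 0" using assms by simp
  have "m \<in> Mset A k \<longleftrightarrow> m \<ge> 1 \<and> A ^ k \<le> m ^ 2 \<and> m ^ 2 < A ^ (k + 1)"
    unfolding Mset_def LP_block_set_def using k0
    by (simp del: of_nat_power of_nat_mult add: of_nat_power[symmetric] of_nat_mult[symmetric] of_nat_le_iff of_nat_less_iff)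
  also have "\<dots> \<longleftrightarrow> A ^ k \<le> m ^ 2 \<and> m ^ 2 < A ^ (k + 1)"
    by (cases m) auto
  also have "\<dots> \<longleftrightarrow> real A ^ k \<le> real m ^ 2 \<and> real m ^ 2 < real A ^ (k + 1)"
    by (simp del: of_nat_power of_nat_mult add: of_nat_power[symmetric] of_nat_mult[symmetric] of_nat_le_iff of_nat_less_iff)
  finally show ?thesis .
qed

lemma Mset_sub:
  assumes "k \<ge> 1"
  shows "Mset A k \<subseteq> {1..nat \<lfloor>sqrt (real A ^ (k + 1))\<rfloor>}"
proof
  fix m assume m: "m \<in> Mset A k"
  then have "m \<ge> 1" by (simp add: Mset_def)
  have "real m ^ 2 < real A ^ (k + 1)" using m Mset_mem[OF assms] by blast
  then have "real m < sqrt (real A ^ (k + 1))" by (intro real_less_rsqrt)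
  then have "m \<le> nat \<lfloor>sqrt (real A ^ (k + 1))\<rfloor>" by linarith
  then show "m \<in> {1..nat \<lfloor>sqrt (real A ^ (k + 1))\<rfloor>}" using \<open>m \<ge> 1\<close> by simp
qed

lemma Mset_card_upper:
  assumes "k \<ge> 1"
  shows "real (card (Mset A k)) \<le> sqrt (real A ^ (k + 1))"
proof -
  have "card (Mset A k) \<le> card {1..nat \<lfloor>sqrt (real A ^ (k + 1))\<rfloor>}"
    by (intro card_mono Mset_sub assms) simp
  then have "real (card (Mset A k)) \<le> real (nat \<lfloor>sqrt (real A ^ (k + 1))\<rfloor>)" by (simp only: of_nat_le_iff card_atLeastAtMost)
  also have "\<dots> = real_of_int \<lfloor>sqrt (real A ^ (k + 1))\<rfloor>" by simp
  also have "\<dots> \<le> sqrt (real A ^ (k + 1))" by linarith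
  finally show ?thesis .
qed

lemma Mset_card_lower:
  assumes "k \<ge> 1"
  shows "real (card (Mset A k)) \<ge> sqrt (real A ^ (k + 1)) - sqrt (real A ^ k) - 1"
proof -
  define a where "a = nat \<lceil>sqrt (real A ^ k)\<rceil>"
  define b where "b = nat \<lceil>sqrt (real A ^ (k + 1))\<rceil>"
  have sub: "{a..<b} \<subseteq> Mset A k"
  proof
    fix m assume m: "m \<in> {a..<b}"
    have "nat \<lceil>sqrt (real A ^ k)\<rceil> \<le> m" using m unfolding a_def by simp
    then have "\<lceil>sqrt (real A ^ k)\<rceil> \<le> int m" by linarith
    then have "sqrt (real A ^ k) \<le> real_of_int (int m)" by (simp only: ceiling_le_iff)
    then have "sqrt (real A ^ k) \<le> real m" by simp
    then have "sqrt (real A ^ k) ^ 2 \<le> real m ^ 2" by (intro power_mono) auto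
    then have 1: "real A ^ k \<le> real m ^ 2" by simp
    have "m < nat \<lceil>sqrt (real A ^ (k + 1))\<rceil>" using m unfolding b_def by simp
    then have "int m < \<lceil>sqrt (real A ^ (k + 1))\<rceil>" by linarith
    then have "real_of_int (int m) < sqrt (real A ^ (k + 1))" by (simp only: less_ceiling_iff)
    then have "real m < sqrt (real A ^ (k + 1))" by simp
    then have "real m ^ 2 < sqrt (real A ^ (k + 1)) ^ 2" by (intro power_strict_mono) auto
    then have 2: "real m ^ 2 < real A ^ (k + 1)" by simp
    show "m \<in> Mset A k" using 1 2 Mset_mem[OF assms] by blast
  qed
  have "card {a..<b} \<le> card (Mset A k)" by (intro card_mono sub finite_Mset)
  then have "real b - real a \<le> real (card (Mset A k))" by simp
  moreover have "real a \<le> sqrt (real A ^ k) + 1"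
  proof -
    have "real a = real_of_int \<lceil>sqrt (real A ^ k)\<rceil>" unfolding a_def by simp
    then show ?thesis by linarith
  qed
  moreover have "real b \<ge> sqrt (real A ^ (k + 1))" unfolding b_def by linarith
  ultimately show ?thesis by linarith
qed

definition wR :: "real \<Rightarrow> nat \<Rightarrow> real" where "wR s m = real m powr (-2 * s)"

definition JJ :: "real \<Rightarrow> nat \<Rightarrow> nat \<Rightarrow> real \<Rightarrow> real" where
  "JJ s A k q = integral {0..1} (\<lambda>x. norm (tp (Mset A k) (wR s) x) powr q)"

lemma powr_numeral_nonneg: "(x::real) \<ge> 0 \<Longrightarrow> x powr (numeral n) = x ^ numeral n"
  by (cases "x = 0") (simp_all add: powr_numeral)

lemma cont_normpow: "q > 0 \<Longrightarrow> continuous_on S (\<lambda>x. norm (tp M w x) powr q)"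
  by (intro continuous_on_powr' continuous_intros) auto

lemma Lp_eq:
  assumes s: "s > 1/2" and p: "p > 0"
  shows "Lp_norm_T p (LP_block A k (R_fun s)) = (JJ s A k p) powr (1 / p)"
proof -
  have w: "wR s = (\<lambda>m. real m powr (-2 * s))" by (rule ext) (simp add: wR_def)
  have e: "LP_block A k (R_fun s) = tp (Mset A k) (wR s)"
    by (rule ext) (simp add: LP_block_R[OF s] w)
  have c: "continuous_on {0..1} (\<lambda>x. norm (tp (Mset A k) (wR s) x) powr p)"
    by (rule cont_normpow[OF p])
  show ?thesis unfolding Lp_norm_T_def e JJ_def lint_eq_integral[OF c] ..
qed

lemma JJ_nonneg: "q > 0 \<Longrightarrow> JJ s A k q \<ge> 0"
  unfolding JJ_def by (intro integral_nonneg integrable_continuous_interval cont_normpow) auto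

context
  fixes s :: real and A k :: nat
  assumes s: "s > 1/2" and A: "A \<ge> 2" and k: "k \<ge> 1"
begin

lemma wR_bounds:
  assumes m: "m \<in> Mset A k"
  shows "(real A ^ (k + 1)) powr (-s) \<le> wR s m" "wR s m \<le> (real A ^ k) powr (-s)" "wR s m \<ge> 0"
proof -
  have mm: "real A ^ k \<le> real m ^ 2" "real m ^ 2 < real A ^ (k + 1)" using m Mset_mem[OF k] by auto
  have m1: "m \<ge> 1" using m by (simp add: Mset_def)
  have Ak: "real A ^ k > 0" using A by simp
  have "real m ^ 2 = real m powr 2" by (simp add: powr_numeral_nonneg)
  moreover have "(real m powr 2) powr (-s) = real m powr (2 * (-s))" by (rule powr_powr)
  moreover have "2 * (-s) = -2 * s" by simp
  ultimately have eq: "wR s m = (real m ^ 2) powr (-s)" unfolding wR_def by metis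
  show "(real A ^ (k + 1)) powr (-s) \<le> wR s m" unfolding eq
    using mm m1 s by (intro powr_mono2') auto
  show "wR s m \<le> (real A ^ k) powr (-s)" unfolding eq
    using mm Ak s by (intro powr_mono2') auto
  show "wR s m \<ge> 0" by (simp add: wR_def)
qed

lemma JJ2_lower:
  "JJ s A k 2 \<ge> real (card (Mset A k)) * ((real A ^ (k + 1)) powr (-s)) ^ 2"
proof -
  have "JJ s A k 2 = integral {0..1} (\<lambda>x. norm (tp (Mset A k) (wR s) x) ^ 2)"
    unfolding JJ_def by (simp add: powr_numeral_nonneg)
  also have "\<dots> = (\<Sum>m\<in>Mset A k. (wR s m) ^ 2)"
    by (rule integral_unique[OF has_integral_tp2[OF finite_Mset]])
  also have "\<dots> \<ge> (\<Sum>m\<in>Mset A k. ((real A ^ (k + 1)) powr (-s)) ^ 2)"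
    by (intro sum_mono power_mono wR_bounds) auto
  finally show ?thesis by simp
qed

lemma JJ4_upper:
  assumes C: "\<And>n. n > 0 \<Longrightarrow> real (tau n) \<le> C * real n powr e" and e: "e > 0" and C0: "C \<ge> 0"
  shows "JJ s A k 4 \<le> ((real A ^ k) powr (-s)) ^ 4 * real (card (Mset A k)) ^ 2 *
                        (1 + C * (real A ^ (k + 1)) powr e)"
proof -
  define K where "K = nat \<lfloor>sqrt (real A ^ (k + 1))\<rfloor>"
  have sub: "Mset A k \<subseteq> {1..K}" unfolding K_def by (rule Mset_sub[OF k])
  have K2: "real K ^ 2 \<le> real A ^ (k + 1)"
  proof -
    have "real K \<le> sqrt (real A ^ (k + 1))" unfolding K_def
    proof -
      have "real (nat \<lfloor>sqrt (real A ^ (k + 1))\<rfloor>) = real_of_int \<lfloor>sqrt (real A ^ (k + 1))\<rfloor>" by simp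
      then show "real (nat \<lfloor>sqrt (real A ^ (k + 1))\<rfloor>) \<le> sqrt (real A ^ (k + 1))" by linarith
    qed
    then have "real K ^ 2 \<le> sqrt (real A ^ (k + 1)) ^ 2" by (intro power_mono) auto
    then show ?thesis by simp
  qed
  have D: "real (tau h) \<le> C * (real A ^ (k + 1)) powr e" if "0 < h" "h \<le> K ^ 2" for h
  proof -
    have "real h \<le> real A ^ (k + 1)" using that K2 by (metis of_nat_le_iff of_nat_power order_trans)
    then have "real h powr e \<le> (real A ^ (k + 1)) powr e" using e by (intro powr_mono2) auto
    then show ?thesis using C[OF that(1)] C0 by (meson mult_left_mono order_trans)
  qed
  have "JJ s A k 4 = integral {0..1} (\<lambda>x. norm (tp (Mset A k) (wR s) x) ^ 4)"
    unfolding JJ_def by (simp add: powr_numeral_nonneg)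
  also have "\<dots> \<le> ((real A ^ k) powr (-s)) ^ 4 *
     (\<Sum>a\<in>Mset A k. \<Sum>b\<in>Mset A k. \<Sum>c\<in>Mset A k. \<Sum>d\<in>Mset A k. if a ^ 2 + b ^ 2 = c ^ 2 + d ^ 2 then 1 else 0 :: real)"
    by (rule integral_tp4_le[OF finite_Mset]) (use wR_bounds in auto)
  also have "\<dots> \<le> ((real A ^ k) powr (-s)) ^ 4 * (real (card (Mset A k)) ^ 2 * (1 + C * (real A ^ (k + 1)) powr e))"
    by (intro mult_left_mono count_sol[OF finite_Mset sub] D) (use C0 in auto)
  finally show ?thesis by (simp add: mult.assoc)
qed

lemma tp_sup:
  "norm (tp (Mset A k) (wR s) x) \<le> real (card (Mset A k)) * (real A ^ k) powr (-s)"
proof -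
  have "norm (tp (Mset A k) (wR s) x) \<le> (\<Sum>m\<in>Mset A k. wR s m)"
    by (rule norm_tp_le) (use wR_bounds in auto)
  also have "\<dots> \<le> (\<Sum>m\<in>Mset A k. (real A ^ k) powr (-s))"
    by (intro sum_mono wR_bounds)
  finally show ?thesis by simp
qed

lemma tp_near0:
  assumes x: "0 \<le> x" "x \<le> 1 / (6 * real A ^ (k + 1))"
  shows "norm (tp (Mset A k) (wR s) x) \<ge> real (card (Mset A k)) * (real A ^ (k + 1)) powr (-s) / 2"
proof -
  have "real (card (Mset A k)) * (real A ^ (k + 1)) powr (-s) = (\<Sum>m\<in>Mset A k. (real A ^ (k + 1)) powr (-s))"
    by simp
  also have "\<dots> \<le> (\<Sum>m\<in>Mset A k. wR s m)" by (intro sum_mono wR_bounds)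
  finally have "real (card (Mset A k)) * (real A ^ (k + 1)) powr (-s) / 2 \<le> (\<Sum>m\<in>Mset A k. wR s m) / 2"
    by simp
  also have "\<dots> \<le> norm (tp (Mset A k) (wR s) x)"
  proof (rule norm_tp_ge[OF _ _ x])
    show "real m ^ 2 \<le> real A ^ (k + 1)" if "m \<in> Mset A k" for m
      using that Mset_mem[OF k] by auto
    show "real A ^ (k + 1) > 0" using A by simp
  qed (use wR_bounds in auto)
  finally show ?thesis .
qed

end

lemma powr_pow_eq: "x > 0 \<Longrightarrow> (x powr a) ^ n = x powr (a * real n)"
  by (simp add: powr_realpow[symmetric] powr_powr)

context
  fixes s :: real and A :: nat
  assumes s: "s > 1/2" and A: "A \<ge> 2"
begin

lemma X_ge1: "real A ^ k \<ge> 1" using A by (simp add: one_le_power)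

lemma N_sq: "k \<ge> 1 \<Longrightarrow> real (card (Mset A k)) ^ 2 \<le> real A * real A ^ k"
proof -
  assume k: "k \<ge> 1"
  have "real (card (Mset A k)) ^ 2 \<le> sqrt (real A ^ (k + 1)) ^ 2"
    using Mset_card_upper[OF k] by (intro power_mono) auto
  then show ?thesis by simp
qed

lemma J4_bound:
  assumes e: "e > 0"
  shows "\<exists>K1>0. \<forall>k\<ge>1. JJ s A k 4 \<le> K1 * (real A ^ k) powr (-4 * s + 1 + e)"
proof -
  obtain C where C0: "C > 0" and C: "\<And>n. n > 0 \<Longrightarrow> real (tau n) \<le> C * real n powr e"
    using divisor_bound[OF e] by blast
  define K1 where "K1 = real A * (1 + C * real A powr e)"
  have K1: "K1 > 0" using A C0 by (simp add: K1_def add_pos_nonneg)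
  show ?thesis
  proof (intro exI[of _ K1] conjI allI impI K1)
    fix k :: nat assume k: "k \<ge> 1"
    define X where "X = real A ^ k"
    have X1: "X \<ge> 1" unfolding X_def by (rule X_ge1)
    have Ap: "real A > 0" using A by simp
    have AX: "real A ^ (k + 1) = real A * X" by (simp add: X_def)
    have "JJ s A k 4 \<le> (X powr (-s)) ^ 4 * real (card (Mset A k)) ^ 2 * (1 + C * (real A * X) powr e)"
      using JJ4_upper[OF s A k C e] C0 by (simp add: X_def)
    also have "\<dots> \<le> X powr (-4 * s) * (real A * X) * ((1 + C * real A powr e) * X powr e)"
    proof (intro mult_mono)
      show "(X powr (-s)) ^ 4 \<le> X powr (-4 * s)" using X1 by (simp add: powr_pow_eq mult.commute)
      show "real (card (Mset A k)) ^ 2 \<le> real A * X" using N_sq[OF k] by (simp add: X_def)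
      have "1 \<le> X powr e" using X1 e by (simp add: ge_one_powr_ge_zero)
      then show "1 + C * (real A * X) powr e \<le> (1 + C * real A powr e) * X powr e"
        using Ap X1 C0 by (simp add: powr_mult algebra_simps)
    qed (use X1 Ap C0 in auto)
    also have "\<dots> = K1 * (X powr (-4 * s) * X * X powr e)" by (simp add: K1_def mult_ac)
    also have "X powr (-4 * s) * X * X powr e = X powr (-4 * s + 1 + e)"
    proof -
      have "X powr (-4 * s + 1 + e) = X powr (-4 * s) * X powr 1 * X powr e" by (simp only: powr_add)
      then show ?thesis using X1 by simp
    qed
    finally show "JJ s A k 4 \<le> K1 * (real A ^ k) powr (-4 * s + 1 + e)" by (simp add: X_def)
  qed
qed

lemma T_eq:
  assumes p: "p > 0"
  shows "real A powr (real k * (\<sigma> / p)) * Lp_norm_T p (LP_block A k (R_fun s)) =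
         (real A ^ k) powr (\<sigma> / p) * (JJ s A k p) powr (1 / p)"
proof -
  have Ap: "real A > 0" using A by simp
  show ?thesis unfolding Xpow[OF Ap] Lp_eq[OF s p] ..
qed

lemma besov_iff:
  assumes p: "p > 0"
  shows "besov_inf A (\<sigma> / p) p (R_fun s) \<longleftrightarrow>
         bdd_above (range (\<lambda>k. (real A ^ k) powr (\<sigma> / p) * (JJ s A k p) powr (1 / p)))"
  unfolding besov_inf_def T_eq[OF p] ..

lemma cont_f: "continuous_on {0..1} (\<lambda>x. norm (tp (Mset A k) (wR s) x))"
  by (intro continuous_intros)

lemma upper_le4:
  assumes p: "0 < p" "p \<le> 4" and sig: "\<sigma> < p * (s - 1/4)"
  shows "besov_inf A (\<sigma> / p) p (R_fun s)"
proof -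
  define e where "e = 4 * (s - 1/4 - \<sigma> / p)"
  have e0: "e > 0" using sig p by (simp add: e_def field_simps)
  obtain K1 where K1: "K1 > 0" and J4: "\<And>k. k \<ge> 1 \<Longrightarrow> JJ s A k 4 \<le> K1 * (real A ^ k) powr (-4 * s + 1 + e)"
    using J4_bound[OF e0] by blast
  define e4 where "e4 = -4 * s + 1 + e"
  have "(real A ^ k) powr (\<sigma> / p) * (JJ s A k p) powr (1 / p) \<le> (2 * K1 powr (p / 4)) powr (1 / p)" if k: "k \<ge> 1" for k
  proof -
    define X where "X = real A ^ k"
    have X1: "X \<ge> 1" unfolding X_def by (rule X_ge1)
    define l where "l = K1 powr (1/4) * X powr (e4 / 4)"
    have l0: "l > 0" using K1 X1 by (simp add: l_def)
    have l4: "l powr 4 = K1 * X powr e4" using K1 X1 by (simp add: l_def powr_mult powr_powr)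
    have lp: "l powr p = K1 powr (p / 4) * X powr (e4 * p / 4)" using K1 X1 by (simp add: l_def powr_mult powr_powr)
    have "JJ s A k p \<le> 2 * l powr p"
      unfolding JJ_def
      by (rule interp_H1[OF cont_f _ p l0]) (use J4[OF k] l4 in \<open>auto simp: JJ_def X_def e4_def\<close>)
    also have "\<dots> = (2 * K1 powr (p / 4)) * X powr (e4 * p / 4)" by (simp add: lp)
    finally have Jp: "JJ s A k p \<le> (2 * K1 powr (p / 4)) * X powr (e4 * p / 4)" .
    have "X powr (\<sigma> / p) * (JJ s A k p) powr (1 / p) \<le> (2 * K1 powr (p / 4)) powr (1 / p) * X powr (\<sigma> / p + e4 * p / 4 / p)"
      by (rule G_up[OF JJ_nonneg[OF p(1)] Jp]) (use K1 X1 p in auto)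
    also have "\<sigma> / p + e4 * p / 4 / p = 0" using p by (simp add: e4_def e_def field_simps)
    finally show ?thesis using A by (simp add: X_def)
  qed
  then show ?thesis unfolding besov_iff[OF p(1)] by (rule bounded_lemma)
qed

lemma upper_gt4:
  assumes p: "4 < p" and sig: "\<sigma> < 1 + p * (s - 1/2)"
  shows "besov_inf A (\<sigma> / p) p (R_fun s)"
proof -
  have p0: "p > 0" using p by simp
  define e where "e = p * s - p / 2 + 1 - \<sigma>"
  have e0: "e > 0" using sig by (simp add: e_def algebra_simps)
  obtain K1 where K1: "K1 > 0" and J4: "\<And>k. k \<ge> 1 \<Longrightarrow> JJ s A k 4 \<le> K1 * (real A ^ k) powr (-4 * s + 1 + e)"
    using J4_bound[OF e0] by blast
  define e4 where "e4 = -4 * s + 1 + e"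
  define K where "K = sqrt (real A) powr (p - 4) * K1"
  have K: "K > 0" using K1 A by (simp add: K_def)
  have "(real A ^ k) powr (\<sigma> / p) * (JJ s A k p) powr (1 / p) \<le> K powr (1 / p)" if k: "k \<ge> 1" for k
  proof -
    define X where "X = real A ^ k"
    have X1: "X \<ge> 1" unfolding X_def by (rule X_ge1)
    have Ap: "real A > 0" using A by simp
    define B where "B = sqrt (real A) * X powr (1/2 - s)"
    have B: "norm (tp (Mset A k) (wR s) x) \<le> B" for x
    proof -
      have "norm (tp (Mset A k) (wR s) x) \<le> real (card (Mset A k)) * X powr (-s)"
        using tp_sup[OF s A k] by (simp add: X_def)
      also have "\<dots> \<le> sqrt (real A * X) * X powr (-s)"
        using Mset_card_upper[OF k] by (intro mult_right_mono) (auto simp: X_def)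
      also have "\<dots> = B"
      proof -
        have "sqrt X = X powr (1/2)" using X1 by (simp add: powr_half_sqrt)
        then have "sqrt (real A * X) * X powr (-s) = sqrt (real A) * (X powr (1/2) * X powr (-s))"
          by (simp add: real_sqrt_mult)
        also have "X powr (1/2) * X powr (-s) = X powr (1/2 - s)" by (simp add: powr_add[symmetric])
        finally show ?thesis by (simp add: B_def)
      qed
      finally show ?thesis .
    qed
    have B0: "B > 0" using Ap X1 by (simp add: B_def)
    have "JJ s A k p \<le> B powr (p - 4) * JJ s A k 4"
      unfolding JJ_def by (rule interp_H2[OF cont_f _ p]) (use B in auto)
    also have "\<dots> \<le> B powr (p - 4) * (K1 * X powr e4)"
      using J4[OF k] by (intro mult_left_mono) (auto simp: X_def e4_def)
    also have "B powr (p - 4) = sqrt (real A) powr (p - 4) * X powr ((1/2 - s) * (p - 4))"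
      using Ap X1 by (simp add: B_def powr_mult powr_powr)
    also have "sqrt (real A) powr (p - 4) * X powr ((1/2 - s) * (p - 4)) * (K1 * X powr e4)
        = K * X powr ((1/2 - s) * (p - 4) + e4)"
      by (simp add: K_def powr_add mult_ac)
    finally have Jp: "JJ s A k p \<le> K * X powr ((1/2 - s) * (p - 4) + e4)" .
    have "X powr (\<sigma> / p) * (JJ s A k p) powr (1 / p) \<le> K powr (1 / p) * X powr (\<sigma> / p + ((1/2 - s) * (p - 4) + e4) / p)"
      by (rule G_up[OF JJ_nonneg[OF p0] Jp]) (use K X1 p0 in auto)
    also have "\<sigma> / p + ((1/2 - s) * (p - 4) + e4) / p = 0" using p0
      by (simp add: e4_def e_def field_simps)
    finally show ?thesis using A by (simp add: X_def)
  qed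
  then show ?thesis unfolding besov_iff[OF p0] by (rule bounded_lemma)
qed

lemma N_lower:
  "\<exists>c1>0. \<exists>X0. \<forall>k\<ge>1. real A ^ k \<ge> X0 \<longrightarrow> real (card (Mset A k)) \<ge> c1 * (real A ^ k) powr (1/2)"
proof -
  define a where "a = sqrt (real A) - 1"
  have "sqrt 2 \<le> sqrt (real A)" using A by simp
  moreover have "sqrt 2 > (1::real)" by simp
  ultimately have a0: "a > 0" by (simp add: a_def)
  show ?thesis
  proof (rule exI[of _ "a / 2"], intro conjI exI[of _ "(2 / a) ^ 2"] allI impI)
    show "a / 2 > 0" using a0 by simp
    fix k :: nat assume k: "k \<ge> 1" and X0: "real A ^ k \<ge> (2 / a) ^ 2"
    define X where "X = real A ^ k"
    have X1: "X \<ge> 1" unfolding X_def by (rule X_ge1)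
    have sX: "sqrt X = X powr (1/2)" using X1 by (simp add: powr_half_sqrt)
    have s2: "2 / a \<le> sqrt X" using X0 unfolding X_def by (rule real_le_rsqrt)
    then have "1 \<le> a * sqrt X / 2" using a0 by (simp add: field_simps)
    moreover have "real (card (Mset A k)) \<ge> sqrt (real A * X) - sqrt X - 1"
      using Mset_card_lower[OF k] by (simp add: X_def)
    moreover have "sqrt (real A * X) - sqrt X = a * sqrt X" by (simp add: a_def real_sqrt_mult algebra_simps)
    ultimately have "real (card (Mset A k)) \<ge> a / 2 * sqrt X" by linarith
    then have "real (card (Mset A k)) \<ge> a / 2 * X powr (1/2)" by (simp only: sX)
    then show "real (card (Mset A k)) \<ge> a / 2 * (real A ^ k) powr (1/2)" by (simp only: X_def)
  qed
qed

lemma J2_lower: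
  "\<exists>c5>0. \<exists>X0. \<forall>k\<ge>1. real A ^ k \<ge> X0 \<longrightarrow> JJ s A k 2 \<ge> c5 * (real A ^ k) powr (1/2 - 2 * s)"
proof -
  obtain c1 X0 where c1: "c1 > 0" and N: "\<And>k. k \<ge> 1 \<Longrightarrow> real A ^ k \<ge> X0 \<Longrightarrow> real (card (Mset A k)) \<ge> c1 * (real A ^ k) powr (1/2)"
    using N_lower by blast
  have Ap: "real A > 0" using A by simp
  show ?thesis
  proof (rule exI[of _ "c1 * real A powr (-2 * s)"], intro exI[of _ X0] conjI allI impI)
    show "c1 * real A powr (-2 * s) > 0" using c1 Ap by simp
    fix k :: nat assume k: "k \<ge> 1" and X0: "real A ^ k \<ge> X0"
    define X where "X = real A ^ k"
    have X1: "X \<ge> 1" unfolding X_def by (rule X_ge1)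
    have "(c1 * X powr (1/2)) * ((real A * X) powr (-s)) ^ 2 \<le> real (card (Mset A k)) * ((real A * X) powr (-s)) ^ 2"
      using N[OF k X0] by (intro mult_right_mono) (auto simp: X_def)
    also have "\<dots> \<le> JJ s A k 2" using JJ2_lower[OF s A k] by (simp add: X_def)
    finally have calc: "JJ s A k 2 \<ge> (c1 * X powr (1/2)) * ((real A * X) powr (-s)) ^ 2" .
    have eq: "(c1 * X powr (1/2)) * ((real A * X) powr (-s)) ^ 2 = c1 * real A powr (-2 * s) * X powr (1/2 - 2 * s)"
    proof -
      have "((real A * X) powr (-s)) ^ 2 = real A powr (-2 * s) * X powr (-2 * s)"
        using Ap X1 by (simp add: powr_pow_eq powr_mult[symmetric] mult.commute)
      moreover have "X powr (1/2) * X powr (-2 * s) = X powr (1/2 - 2 * s)" by (simp add: powr_add[symmetric])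
      ultimately show ?thesis by (simp add: mult_ac)
    qed
    show "JJ s A k 2 \<ge> c1 * real A powr (-2 * s) * (real A ^ k) powr (1/2 - 2 * s)"
      using calc[unfolded eq] by (simp only: X_def)
  qed
qed

lemma lower_gt4:
  assumes p: "4 < p" and sig: "\<sigma> > 1 + p * (s - 1/2)"
  shows "\<not> besov_inf A (\<sigma> / p) p (R_fun s)"
proof -
  have p0: "p > 0" using p by simp
  have Ap: "real A > 0" using A by simp
  obtain c1 X0 where c1: "c1 > 0" and N: "\<And>k. k \<ge> 1 \<Longrightarrow> real A ^ k \<ge> X0 \<Longrightarrow> real (card (Mset A k)) \<ge> c1 * (real A ^ k) powr (1/2)"
    using N_lower by blast
  define c2 where "c2 = c1 * real A powr (-s) / 2"
  have c2: "c2 > 0" using c1 Ap by (simp add: c2_def)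
  define K where "K = c2 powr p / (6 * real A)"
  have K: "K > 0" using c2 Ap by (simp add: K_def)
  define d where "d = \<sigma> / p + (1/2 - s) - 1 / p"
  have "d = (\<sigma> - (1 + p * (s - 1/2))) / p" unfolding d_def using p0 by (simp add: field_simps)
  then have d: "d > 0" using sig p0 by simp
  have "\<not> bdd_above (range (\<lambda>k. (real A ^ k) powr (\<sigma> / p) * (JJ s A k p) powr (1 / p)))"
  proof (rule unbounded_lemma[OF A _ d])
    show "K powr (1 / p) > 0" using K by simp
    fix k :: nat assume k: "k \<ge> 1" and X0: "real A ^ k \<ge> X0"
    define X where "X = real A ^ k"
    have X1: "X \<ge> 1" unfolding X_def by (rule X_ge1)
    define b where "b = c2 * X powr (1/2 - s)"
    define dd where "dd = 1 / (6 * real A ^ (k + 1))"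
    have dd: "0 < dd" "dd \<le> 1" using Ap X_ge1[of "k+1"] by (auto simp: dd_def)
    have b0: "b \<ge> 0" using c2 by (simp add: b_def)
    have bx: "b \<le> norm (tp (Mset A k) (wR s) x)" if x: "x \<in> {0..dd}" for x
    proof -
      have "b = (c1 * X powr (1/2)) * (real A * X) powr (-s) / 2"
      proof -
        have "(real A * X) powr (-s) = real A powr (-s) * X powr (-s)" using Ap X1 by (simp add: powr_mult)
        moreover have "X powr (1/2) * X powr (-s) = X powr (1/2 - s)" by (simp add: powr_add[symmetric])
        ultimately show ?thesis by (simp add: b_def c2_def mult_ac)
      qed
      also have "\<dots> \<le> real (card (Mset A k)) * (real A * X) powr (-s) / 2"
        using N[OF k X0] by (intro divide_right_mono mult_right_mono) (auto simp: X_def)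
      also have "\<dots> \<le> norm (tp (Mset A k) (wR s) x)"
        using tp_near0[OF s A k, of x] x by (simp add: dd_def X_def)
      finally show ?thesis .
    qed
    have "dd * b powr p \<le> JJ s A k p"
      unfolding JJ_def by (rule interp_H5[OF cont_f _ p0 dd b0 bx]) auto
    moreover have "dd * b powr p = K * X powr ((1/2 - s) * p - 1)"
    proof -
      have bp: "b powr p = c2 powr p * X powr ((1/2 - s) * p)" using c2 X1 by (simp add: b_def powr_mult powr_powr)
      have dde: "dd = 1 / (6 * real A * X)" by (simp add: dd_def X_def mult_ac)
      have e1: "X powr ((1/2 - s) * p - 1) = X powr ((1/2 - s) * p) / X" using X1 by (simp add: powr_diff)
      show ?thesis unfolding bp dde e1 K_def by (simp add: field_simps)
    qed
    ultimately have Jp: "JJ s A k p \<ge> K * X powr ((1/2 - s) * p - 1)" by simp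
    have "X powr (\<sigma> / p) * (JJ s A k p) powr (1 / p) \<ge> K powr (1 / p) * X powr (\<sigma> / p + ((1/2 - s) * p - 1) / p)"
      by (rule G_low[OF Jp K]) (use X1 p0 in auto)
    moreover have "\<sigma> / p + ((1/2 - s) * p - 1) / p = d" using p0 by (simp add: d_def field_simps)
    ultimately show "(real A ^ k) powr (\<sigma> / p) * (JJ s A k p) powr (1 / p) \<ge> K powr (1 / p) * (real A ^ k) powr d"
      by (simp add: X_def)
  qed
  then show ?thesis unfolding besov_iff[OF p0] .
qed

lemma lower_mid:
  assumes p: "2 \<le> p" and sig: "\<sigma> > p * (s - 1/4)"
  shows "\<not> besov_inf A (\<sigma> / p) p (R_fun s)"
proof -
  have p0: "p > 0" using p by simp
  obtain c5 X0 where c5: "c5 > 0" and J2: "\<And>k. k \<ge> 1 \<Longrightarrow> real A ^ k \<ge> X0 \<Longrightarrow> JJ s A k 2 \<ge> c5 * (real A ^ k) powr (1/2 - 2 * s)"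
    using J2_lower by blast
  define K where "K = (c5 / 2) powr (p / 2)"
  have K: "K > 0" using c5 by (simp add: K_def)
  define d where "d = \<sigma> / p + (1/4 - s)"
  have "d = (\<sigma> - p * (s - 1/4)) / p" unfolding d_def using p0 by (simp add: field_simps)
  then have d: "d > 0" using sig p0 by simp
  have "\<not> bdd_above (range (\<lambda>k. (real A ^ k) powr (\<sigma> / p) * (JJ s A k p) powr (1 / p)))"
  proof (rule unbounded_lemma[OF A _ d])
    show "K powr (1 / p) > 0" using K by simp
    fix k :: nat assume k: "k \<ge> 1" and X0: "real A ^ k \<ge> X0"
    define X where "X = real A ^ k"
    have X1: "X \<ge> 1" unfolding X_def by (rule X_ge1)
    define J2v where "J2v = JJ s A k 2"
    have J2l: "J2v \<ge> c5 * X powr (1/2 - 2 * s)" using J2[OF k X0] by (simp add: J2v_def X_def)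
    have J2p: "J2v > 0" using J2l c5 X1 by (smt (verit) powr_gt_zero mult_pos_pos)
    define m where "m = (J2v / 2) powr (1/2)"
    have m0: "m > 0" using J2p by (simp add: m_def)
    have m2: "m powr 2 = J2v / 2" using J2p by (simp add: m_def powr_powr)
    have "J2v \<le> m powr 2 + m powr (2 - p) * JJ s A k p"
      unfolding J2v_def JJ_def by (rule interp_H4[OF cont_f _ p m0]) auto
    then have h: "J2v / 2 \<le> m powr (2 - p) * JJ s A k p" using m2 by simp
    have "m powr p = m powr (p - 2) * (J2v / 2)"
    proof -
      have "m powr p = m powr (p - 2) * m powr 2" by (subst powr_add[symmetric]) simp
      then show ?thesis by (simp only: m2)
    qed
    also have "\<dots> \<le> m powr (p - 2) * (m powr (2 - p) * JJ s A k p)"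
      using h by (intro mult_left_mono) auto
    also have "\<dots> = JJ s A k p" using m0 by (simp add: powr_add[symmetric] mult.assoc[symmetric])
    finally have Jm: "m powr p \<le> JJ s A k p" .
    have "m powr p = (J2v / 2) powr (p / 2)" using J2p by (simp add: m_def powr_powr)
    also have "\<dots> \<ge> (c5 / 2 * X powr (1/2 - 2 * s)) powr (p / 2)"
      using J2l c5 p0 by (intro powr_mono2) auto
    also have "(c5 / 2 * X powr (1/2 - 2 * s)) powr (p / 2) = K * X powr ((1/2 - 2 * s) * (p / 2))"
    proof -
      have "(c5 / 2 * X powr (1/2 - 2 * s)) powr (p / 2) = (c5 / 2) powr (p / 2) * (X powr (1/2 - 2 * s)) powr (p / 2)"
        by (rule powr_mult)
      also have "(X powr (1/2 - 2 * s)) powr (p / 2) = X powr ((1/2 - 2 * s) * (p / 2))" by (rule powr_powr)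
      finally show ?thesis by (simp only: K_def)
    qed
    finally have Jp: "JJ s A k p \<ge> K * X powr ((1/2 - 2 * s) * (p / 2))" using Jm by linarith
    have "X powr (\<sigma> / p) * (JJ s A k p) powr (1 / p) \<ge> K powr (1 / p) * X powr (\<sigma> / p + (1/2 - 2 * s) * (p / 2) / p)"
      by (rule G_low[OF Jp K]) (use X1 p0 in auto)
    moreover have "\<sigma> / p + (1/2 - 2 * s) * (p / 2) / p = d" using p0 by (simp add: d_def field_simps)
    ultimately show "(real A ^ k) powr (\<sigma> / p) * (JJ s A k p) powr (1 / p) \<ge> K powr (1 / p) * (real A ^ k) powr d"
      by (simp add: X_def)
  qed
  then show ?thesis unfolding besov_iff[OF p0] .
qed

lemma lower_small:
  assumes p: "0 < p" "p < 2" and sig: "\<sigma> > p * (s - 1/4)"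
  shows "\<not> besov_inf A (\<sigma> / p) p (R_fun s)"
proof -
  define eta where "eta = \<sigma> / p + 1/4 - s"
  have "eta = (\<sigma> - p * (s - 1/4)) / p" unfolding eta_def using p by (simp add: field_simps)
  then have eta: "eta > 0" using sig p by simp
  define e where "e = eta * p / (2 - p)"
  have e0: "e > 0" using eta p by (simp add: e_def)
  obtain K1 where K1: "K1 > 0" and J4: "\<And>k. k \<ge> 1 \<Longrightarrow> JJ s A k 4 \<le> K1 * (real A ^ k) powr (-4 * s + 1 + e)"
    using J4_bound[OF e0] by blast
  obtain c5 X0 where c5: "c5 > 0" and J2: "\<And>k. k \<ge> 1 \<Longrightarrow> real A ^ k \<ge> X0 \<Longrightarrow> JJ s A k 2 \<ge> c5 * (real A ^ k) powr (1/2 - 2 * s)"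
    using J2_lower by blast
  define g where "g = 1/2 - 2 * s + e"
  define a where "a = 2 * K1 / c5"
  have a: "a > 0" using K1 c5 by (simp add: a_def)
  define K where "K = a powr ((p - 2) / 2) * (c5 / 2)"
  have K: "K > 0" using a c5 by (simp add: K_def)
  define d where "d = eta / 2"
  have d: "d > 0" using eta by (simp add: d_def)
  have "\<not> bdd_above (range (\<lambda>k. (real A ^ k) powr (\<sigma> / p) * (JJ s A k p) powr (1 / p)))"
  proof (rule unbounded_lemma[OF A _ d])
    show "K powr (1 / p) > 0" using K by simp
    fix k :: nat assume k: "k \<ge> 1" and X0: "real A ^ k \<ge> X0"
    define X where "X = real A ^ k"
    have X1: "X \<ge> 1" unfolding X_def by (rule X_ge1)
    define l where "l = a powr (1/2) * X powr (g / 2)"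
    have l0: "l > 0" using a X1 by (simp add: l_def)
    have lq: "l powr q = a powr (q / 2) * X powr (g * q / 2)" for q
    proof -
      have "l powr q = (a powr (1/2)) powr q * (X powr (g / 2)) powr q" unfolding l_def by (rule powr_mult)
      also have "\<dots> = a powr (q / 2) * X powr (g * q / 2)" by (simp add: powr_powr)
      finally show ?thesis .
    qed
    define J2v where "J2v = JJ s A k 2"
    have J2l: "J2v \<ge> c5 * X powr (1/2 - 2 * s)" using J2[OF k X0] by (simp add: J2v_def X_def)
    have H3: "J2v \<le> l powr (2 - p) * JJ s A k p + l powr (-2) * JJ s A k 4"
      unfolding J2v_def JJ_def by (rule interp_H3[OF cont_f _ p(1) _ l0]) (use p in auto)
    have "l powr (-2) * JJ s A k 4 \<le> l powr (-2) * (K1 * X powr (-4 * s + 1 + e))"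
      using J4[OF k] by (intro mult_left_mono) (auto simp: X_def)
    also have "\<dots> = (a powr (-1) * K1) * (X powr (- g) * X powr (-4 * s + 1 + e))"
      by (simp add: lq mult_ac)
    also have "X powr (- g) * X powr (-4 * s + 1 + e) = X powr (1/2 - 2 * s)"
      by (simp add: powr_add[symmetric] g_def)
    also have "a powr (-1) * K1 = c5 / 2" using a K1 c5 by (simp add: a_def powr_minus field_simps)
    finally have "l powr (-2) * JJ s A k 4 \<le> J2v / 2" using J2l by simp
    then have h: "J2v / 2 \<le> l powr (2 - p) * JJ s A k p" using H3 by simp
    have "K * X powr (g * (p - 2) / 2 + (1/2 - 2 * s)) = l powr (p - 2) * (c5 / 2 * X powr (1/2 - 2 * s))"
      by (simp add: K_def lq powr_add mult_ac)
    also have "\<dots> \<le> l powr (p - 2) * (J2v / 2)"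
      using J2l by (intro mult_left_mono) auto
    also have "\<dots> \<le> l powr (p - 2) * (l powr (2 - p) * JJ s A k p)"
      using h by (intro mult_left_mono) auto
    also have "\<dots> = JJ s A k p" using l0 by (simp add: powr_add[symmetric] mult.assoc[symmetric])
    finally have Jp: "JJ s A k p \<ge> K * X powr (g * (p - 2) / 2 + (1/2 - 2 * s))" .
    have "X powr (\<sigma> / p) * (JJ s A k p) powr (1 / p) \<ge> K powr (1 / p) * X powr (\<sigma> / p + (g * (p - 2) / 2 + (1/2 - 2 * s)) / p)"
      by (rule G_low[OF Jp K]) (use X1 p in auto)
    moreover have "\<sigma> / p + (g * (p - 2) / 2 + (1/2 - 2 * s)) / p = d"
      using p by (simp add: d_def g_def e_def eta_def field_simps)
    ultimately show "(real A ^ k) powr (\<sigma> / p) * (JJ s A k p) powr (1 / p) \<ge> K powr (1 / p) * (real A ^ k) powr d"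
      by (simp add: X_def)
  qed
  then show ?thesis unfolding besov_iff[OF p(1)] .
qed

end

lemma sup_char:
  fixes S :: "real set" and c :: real
  assumes lo: "\<And>\<sigma>. \<sigma> < c \<Longrightarrow> \<sigma> \<in> S" and hi: "\<And>\<sigma>. \<sigma> > c \<Longrightarrow> \<sigma> \<notin> S"
  shows "(SUP \<sigma>\<in>S. ereal \<sigma>) = ereal c"
proof (rule antisym)
  show "(SUP \<sigma>\<in>S. ereal \<sigma>) \<le> ereal c"
  proof (rule SUP_least)
    fix \<sigma> assume "\<sigma> \<in> S"
    then have "\<not> \<sigma> > c" using hi by blast
    then show "ereal \<sigma> \<le> ereal c" by simp
  qed
  show "ereal c \<le> (SUP \<sigma>\<in>S. ereal \<sigma>)"
    unfolding le_SUP_iff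
  proof (intro allI impI)
    fix y :: ereal assume y: "y < ereal c"
    show "\<exists>i\<in>S. y < ereal i"
    proof (cases y)
      case (real r)
      then have "r < c" using y by simp
      then show ?thesis using real by (intro bexI[of _ "(r + c) / 2"] lo) auto
    next
      case PInf then show ?thesis using y by simp
    next
      case MInf then show ?thesis by (intro bexI[of _ "c - 1"] lo) auto
    qed
  qed
qed

theorem propositionE:
  fixes s p :: real and A :: nat
  assumes "s > 1/2" and "p > 0" and "A \<ge> 2"
  shows "(SUP \<sigma>\<in>{\<sigma>::real. besov_inf A (\<sigma> / p) p (R_fun s)}. ereal \<sigma>) =
           ereal (if p \<le> 4 then p * (s - 1/4) else 1 + p * (s - 1/2))"
proof (rule sup_char)
  fix \<sigma> :: real
  assume sig: "\<sigma> < (if p \<le> 4 then p * (s - 1/4) else 1 + p * (s - 1/2))"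
  show "\<sigma> \<in> {\<sigma>::real. besov_inf A (\<sigma> / p) p (R_fun s)}"
  proof (cases "p \<le> 4")
    case True
    then show ?thesis using upper_le4[OF assms(1) assms(3) assms(2) True] sig by simp
  next
    case False
    then show ?thesis using upper_gt4[OF assms(1) assms(3)] sig by simp
  qed
next
  fix \<sigma> :: real
  assume sig: "\<sigma> > (if p \<le> 4 then p * (s - 1/4) else 1 + p * (s - 1/2))"
  show "\<sigma> \<notin> {\<sigma>::real. besov_inf A (\<sigma> / p) p (R_fun s)}"
  proof (cases "p \<le> 4")
    case True
    show ?thesis
    proof (cases "p < 2")
      case True
      then show ?thesis using lower_small[OF assms(1) assms(3) assms(2) True] sig \<open>p \<le> 4\<close> by simp
    next
      case False
      then show ?thesis using lower_mid[OF assms(1) assms(3)] sig \<open>p \<le> 4\<close> by simp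
    qed
  next
    case False
    then show ?thesis using lower_gt4[OF assms(1) assms(3)] sig by simp
  qed
qed

end
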